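(* Let $d$ be a probability distribution on a state space $X$, let $\phi = (\phi_1,\dots,\phi_n)^T : X \to \mathbb{R}^n$ be a fixed feature map and $V : X \to \mathbb{R}$ a fixed target function (the value-iteration target $V(x) = c(x,\pi(x)) + \gamma\,\mathbb{E}[V^{\mathrm{current}}(x_+)\mid x, a=\pi(x)]$), with $\mathbb{E}_d\|\phi(x)\|^2<\infty$ and $\mathbb{E}_d V(x)^2<\infty$, and define $$J(w) = \mathbb{E}_{x\sim d}\Big[\big(V(x) - w^T\phi(x)\big)^2\Big], \qquad w\in\mathbb{R}^n .$$ Let $\Phi := \mathbb{E}_d[\phi(x)\phi(x)^T]$ and assume: (i) $\Phi$ is positive definite (so $J$ has a unique minimizer $w^*$); (ii) the step size $\epsilon>0$ satisfies $|1-2\epsilon\lambda_i(\Phi)|<1$ for every eigenvalue $\lambda_i(\Phi)$ of $\Phi$; (iii) the parameter $\rho\in(0,1)$ satisfies $\rho \ge \max_i (1-2\epsilon\lambda_i(\Phi))^2$. Fix $\lambda>0$, an integer $N\ge 1$ and an initial vector $w_0\in\mathbb{R}^n$. For $k=0,\dots,N-1$, two agents $i=1,2$ produce random vectors $g_k^1, g_k^2$ (stochastic gradients) which, conditionally on the past (in particular on $w_k$), are independent and identically distributed with mean $\nabla J(w_k)$ and covariance $G$ (a fixed matrix, the same for all $k$). Each agent decides $$\alpha_k^i = \begin{cases} 1 & \text{if } J(w_k - \epsilon g_k^i) - J(w_k) \le -\dfrac{\lambda}{\rho^{N-1-k}N},\\ 0 & \text{otherwise,}\end{cases}$$ and the iterate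 is updated as $w_{k+1} = w_k - \epsilon g_k^1$ if $(\alpha_k^1,\alpha_k^2)=(1,0)$, $w_{k+1}=w_k-\epsilon g_k^2$ if $(\alpha_k^1,\alpha_k^2)=(0,1)$, $w_{k+1} = w_k - \tfrac{\epsilon}{2}(g_k^1+g_k^2)$ if $(\alpha_k^1,\alpha_k^2)=(1,1)$, and $w_{k+1}=w_k$ if $(\alpha_k^1,\alpha_k^2)=(0,0)$. Then $$\mathbb{E}\left[\lambda\sum_{k=0}^{N-1}\frac{\alpha_k^1+\alpha_k^2}{2N} + J(w_N)\right] \le \lambda + J(w^* ) + \rho^N\big[J(w_0)-J(w^* )\big] + \frac{1-\rho^N}{1-\rho}\,\epsilon^2\,\mathrm{Tr}(\Phi G),$$ where the expectation is over all the randomness (the data generating the stochastic gradients) up to iteration $N$.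
   Context: This models communication-efficient distributed linear value function approximation: a server holds weights $w_k$, each agent computes a local stochastic gradient $g_k^i$ of $J$ at $w_k$ from locally collected state-transition data, and transmits it only when the resulting decrease of $J$ is large enough; $\alpha_k^i\in\{0,1\}$ indicates whether agent $i$ transmits at iteration $k$. $\lambda_i(\Phi)$ denotes the eigenvalues of the symmetric matrix $\Phi$, and $\mathrm{Tr}$ is the trace. *)

theory Defs
  imports "HOL-Analysis.Analysis" "HOL-Probability.Probability"
begin

definition Jobj :: "'x measure \<Rightarrow> ('x \<Rightarrow> real) \<Rightarrow> ('x \<Rightarrow> real^'n) \<Rightarrow> real^'n \<Rightarrow> real" where
  "Jobj d V phi w = (\<integral>x. (V x - w \<bullet> phi x)^2 \<partial>d)"

definition grad :: "(real^'n \<Rightarrow> real) \<Rightarrow> real^'n \<Rightarrow> real^'n" where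
  "grad f w = (THE v. (f has_derivative (\<lambda>h. v \<bullet> h)) (at w))"

definition Phi_mat :: "'x measure \<Rightarrow> ('x \<Rightarrow> real^'n) \<Rightarrow> real^'n^'n" where
  "Phi_mat d phi = (\<chi> i j. \<integral>x. phi x $ i * phi x $ j \<partial>d)"

definition pos_def :: "real^'n^'n \<Rightarrow> bool" where
  "pos_def A \<longleftrightarrow> (\<forall>v. v \<noteq> 0 \<longrightarrow> v \<bullet> (A *v v) > 0)"

definition is_eigenvalue :: "real^'n^'n \<Rightarrow> real \<Rightarrow> bool" where
  "is_eigenvalue A l \<longleftrightarrow> (\<exists>v. v \<noteq> 0 \<and> A *v v = l *\<^sub>R v)"

definition alpha :: "(real^'n \<Rightarrow> real) \<Rightarrow> real \<Rightarrow> real \<Rightarrow> real \<Rightarrow> nat \<Rightarrow> nat \<Rightarrow> real^'n \<Rightarrow> real^'n \<Rightarrow> real" where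
  "alpha J eps lam rho N k w g =
     (if J (w - eps *\<^sub>R g) - J w \<le> - (lam / (rho ^ (N - 1 - k) * real N)) then 1 else 0)"

definition upd :: "real \<Rightarrow> real \<Rightarrow> real \<Rightarrow> real^'n \<Rightarrow> real^'n \<Rightarrow> real^'n \<Rightarrow> real^'n" where
  "upd eps a1 a2 w g1 g2 =
     (if a1 = 1 \<and> a2 = 0 then w - eps *\<^sub>R g1
      else if a1 = 0 \<and> a2 = 1 then w - eps *\<^sub>R g2
      else if a1 = 1 \<and> a2 = 1 then w - (eps / 2) *\<^sub>R (g1 + g2)
      else w)"

fun traj :: "(real^'n \<Rightarrow> real) \<Rightarrow> real \<Rightarrow> real \<Rightarrow> real \<Rightarrow> nat \<Rightarrow> real^'n
    \<Rightarrow> (nat \<Rightarrow> real^'n) \<Rightarrow> (nat \<Rightarrow> real^'n) \<Rightarrow> nat \<Rightarrow> real^'n" where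
  "traj J eps lam rho N w0 g1 g2 0 = w0"
| "traj J eps lam rho N w0 g1 g2 (Suc k) =
     (let w = traj J eps lam rho N w0 g1 g2 k in
      upd eps (alpha J eps lam rho N k w (g1 k)) (alpha J eps lam rho N k w (g2 k)) w (g1 k) (g2 k))"

end

theory Submission
  imports Defs
begin


lemma quad_zero:
  fixes a b :: real
  assumes "\<And>t. a * t + b * t^2 \<le> 0"
  shows "a = 0"
proof (rule ccontr)
  assume a: "a \<noteq> 0"
  define t where "t = a / (2 * (\<bar>b\<bar> + 1))"
  have pos: "\<bar>b\<bar> + 1 > 0" by simp
  have "a * t = a^2 / (2 * (\<bar>b\<bar> + 1))" unfolding t_def by (simp add: power2_eq_square)
  moreover have "b * t^2 = b * a^2 / (4 * (\<bar>b\<bar> + 1)^2)" unfolding t_def by (simp add: power2_eq_square field_simps)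
  moreover have "b * a^2 / (4 * (\<bar>b\<bar> + 1)^2) \<ge> - (a^2 / (4 * (\<bar>b\<bar> + 1)))"
  proof -
    have "b * a^2 \<ge> - (\<bar>b\<bar> + 1) * a^2" by (smt (verit) mult_right_mono zero_le_power2)
    then have "b * a^2 / (4 * (\<bar>b\<bar> + 1)^2) \<ge> - (\<bar>b\<bar> + 1) * a^2 / (4 * (\<bar>b\<bar> + 1)^2)"
      by (simp add: divide_right_mono)
    also have "- (\<bar>b\<bar> + 1) * a^2 / (4 * (\<bar>b\<bar> + 1)^2) = - (a^2 / (4 * (\<bar>b\<bar> + 1)))"
    proof -
      have "\<And>c::real. c > 0 \<Longrightarrow> - c * a^2 / (4 * c^2) = - (a^2 / (4 * c))"
        by (simp add: power2_eq_square field_simps)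
      then show ?thesis using pos by blast
    qed
    finally show ?thesis .
  qed
  ultimately have "a * t + b * t^2 \<ge> a^2 / (2 * (\<bar>b\<bar> + 1)) - a^2 / (4 * (\<bar>b\<bar> + 1))" by linarith
  moreover have "a^2 / (2 * (\<bar>b\<bar> + 1)) - a^2 / (4 * (\<bar>b\<bar> + 1)) = a^2 / (4 * (\<bar>b\<bar> + 1))"
  proof -
    have "\<And>c::real. c > 0 \<Longrightarrow> a^2 / (2 * c) - a^2 / (4 * c) = a^2 / (4 * c)"
      by (simp add: field_simps)
    then show ?thesis using pos by blast
  qed
  moreover have "a^2 / (4 * (\<bar>b\<bar> + 1)) > 0" using a pos by simp
  ultimately show False using assms[of t] by (smt (verit))
qed

lemma sym_max_eig:
  fixes f :: "'a::euclidean_space \<Rightarrow> 'a" and S :: "'a set"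
  assumes lin: "linear f" and sym: "\<And>x y. x \<bullet> f y = f x \<bullet> y"
    and S: "subspace S" and inv: "\<And>x. x \<in> S \<Longrightarrow> f x \<in> S"
    and ne: "v0 \<in> S" "v0 \<noteq> 0"
  shows "\<exists>u\<in>S. u \<noteq> 0 \<and> f u = (u \<bullet> f u) *\<^sub>R u \<and> (\<forall>v\<in>S. v \<bullet> f v \<le> (u \<bullet> f u) * (v \<bullet> v))"
proof -
  define K where "K = S \<inter> sphere 0 1"
  have cK: "compact K" unfolding K_def
    by (simp add: S closed_Int_compact closed_subspace)
  have "v0 /\<^sub>R norm v0 \<in> K" unfolding K_def using ne S
    by (simp add: subspace_scale)
  then have neK: "K \<noteq> {}" by auto
  have bl: "bounded_linear f" using lin by (simp add: linear_conv_bounded_linear)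
  have cont: "continuous_on K (\<lambda>x. x \<bullet> f x)"
    by (intro continuous_intros linear_continuous_on bl)
  obtain u where uK: "u \<in> K" and umax: "\<And>y. y \<in> K \<Longrightarrow> y \<bullet> f y \<le> u \<bullet> f u"
    using continuous_attains_sup[OF cK neK cont] by blast
  define m where "m = u \<bullet> f u"
  have uS: "u \<in> S" and un: "norm u = 1" using uK unfolding K_def by auto
  have uu: "u \<bullet> u = 1" using un by (simp add: norm_eq_1)
  have bound: "v \<bullet> f v \<le> m * (v \<bullet> v)" if vS: "v \<in> S" for v
  proof (cases "v = 0")
    case True then show ?thesis by (simp add: linear_0[OF lin])
  next
    case False
    define y where "y = v /\<^sub>R norm v"
    have "y \<in> K" unfolding K_def y_def using vS False S by (simp add: subspace_scale)
    then have "y \<bullet> f y \<le> m" using umax m_def by auto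
    moreover have "y \<bullet> f y = (v \<bullet> f v) / (norm v)^2"
      unfolding y_def by (simp add: linear_scale[OF lin] power2_eq_square divide_inverse)
    moreover have "v \<bullet> v = (norm v)^2" by (simp add: power2_norm_eq_inner)
    moreover have "(norm v)^2 > 0" using False by simp
    ultimately show ?thesis by (simp add: divide_le_eq)
  qed
  define r where "r = f u - m *\<^sub>R u"
  have rS: "r \<in> S" unfolding r_def using uS inv S by (simp add: subspace_diff subspace_scale)
  have orth: "h \<bullet> r = 0" if hS: "h \<in> S" for h
  proof -
    have "(h \<bullet> f u - m * (u \<bullet> h)) * (2*t) + (h \<bullet> f h - m * (h \<bullet> h)) * t^2 \<le> 0" for t
    proof -
      have "u + t *\<^sub>R h \<in> S" using uS hS S by (simp add: subspace_add subspace_scale)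
      from bound[OF this] have "(u + t *\<^sub>R h) \<bullet> f (u + t *\<^sub>R h) \<le> m * ((u + t *\<^sub>R h) \<bullet> (u + t *\<^sub>R h))" .
      moreover have "(u + t *\<^sub>R h) \<bullet> f (u + t *\<^sub>R h) = m + 2 * t * (h \<bullet> f u) + t^2 * (h \<bullet> f h)"
        using sym[of u h] sym[of h u]
        by (simp add: linear_add[OF lin] linear_scale[OF lin] inner_add_left inner_add_right m_def
             power2_eq_square algebra_simps inner_commute)
      moreover have "(u + t *\<^sub>R h) \<bullet> (u + t *\<^sub>R h) = 1 + 2 * t * (u \<bullet> h) + t^2 * (h \<bullet> h)"
        using uu by (simp add: inner_add_left inner_add_right power2_eq_square algebra_simps inner_commute)
      ultimately have "m + 2 * t * (h \<bullet> f u) + t^2 * (h \<bullet> f h) \<le> m * (1 + 2 * t * (u \<bullet> h) + t^2 * (h \<bullet> h))"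
        by metis
      then show ?thesis by (simp add: algebra_simps inner_commute[of h u])
    qed
    then have "h \<bullet> f u - m * (u \<bullet> h) = 0" using quad_zero[of "2 * (h \<bullet> f u - m * (u \<bullet> h))" "h \<bullet> f h - m * (h \<bullet> h)"]
      by (simp add: algebra_simps)
    then show ?thesis unfolding r_def by (simp add: inner_diff_right inner_commute)
  qed
  have "r = 0" using orth[OF rS] by simp
  then have "f u = m *\<^sub>R u" unfolding r_def by simp
  moreover have "u \<noteq> 0" using un by auto
  ultimately show ?thesis using uS bound m_def by blast
qed




lemma sym_mat_inner:
  fixes P :: "real^'n^'n"
  assumes symP: "\<And>i j. P$i$j = P$j$i"
  shows "x \<bullet> (P *v y) = (P *v x) \<bullet> y"
proof -
  have "x \<bullet> (P *v y) = (\<Sum>i\<in>UNIV. \<Sum>j\<in>UNIV. x$i * P$i$j * y$j)"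
    by (simp add: inner_vec_def matrix_vector_mult_def sum_distrib_left mult.assoc)
  also have "\<dots> = (\<Sum>j\<in>UNIV. \<Sum>i\<in>UNIV. x$i * P$i$j * y$j)" by (rule sum.swap)
  also have "\<dots> = (\<Sum>j\<in>UNIV. \<Sum>i\<in>UNIV. P$j$i * x$i * y$j)"
    by (intro sum.cong refl) (simp add: symP mult_ac)
  also have "\<dots> = (P *v x) \<bullet> y"
    by (simp add: inner_vec_def matrix_vector_mult_def sum_distrib_right)
  finally show ?thesis .
qed

lemma contraction:
  fixes P :: "real^'n^'n" and eps rho :: real
  assumes symP: "\<And>i j. P$i$j = P$j$i"
    and pd: "pos_def P"
    and rho_ge: "\<forall>l. is_eigenvalue P l \<longrightarrow> (1 - 2 * eps * l)^2 \<le> rho"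
  shows "(x - (2*eps) *\<^sub>R (P *v x)) \<bullet> (P *v (x - (2*eps) *\<^sub>R (P *v x))) \<le> rho * (x \<bullet> (P *v x))"
proof -
  define F where "F = (\<lambda>x::real^'n. P *v x)"
  define A where "A = (\<lambda>x. x - (2*eps) *\<^sub>R F x)"
  define C where "C = (\<lambda>x. A (F (A x)) - rho *\<^sub>R F x)"
  have linF: "linear F" unfolding F_def by (simp add: matrix_vector_mul_linear)
  have symF: "\<And>x y. x \<bullet> F y = F x \<bullet> y" unfolding F_def by (rule sym_mat_inner[OF symP])
  have linA: "linear A" unfolding A_def
    by (rule linearI) (simp_all add: linear_add[OF linF] linear_scale[OF linF] algebra_simps)
  have symA: "\<And>x y. x \<bullet> A y = A x \<bullet> y" unfolding A_def using symF by (simp add: inner_diff_left inner_diff_right)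
  have linC: "linear C" unfolding C_def
    by (rule linearI) (simp_all add: linear_add[OF linF] linear_scale[OF linF] linear_add[OF linA] linear_scale[OF linA] algebra_simps)
  have symC: "\<And>x y. x \<bullet> C y = C x \<bullet> y" unfolding C_def
    by (simp add: inner_diff_left inner_diff_right symA symF)
  have AF: "A (F v) = F (A v)" for v unfolding A_def by (simp add: linear_diff[OF linF] linear_scale[OF linF])
  have CF: "C (F v) = F (C v)" for v unfolding C_def
    by (simp add: AF linear_diff[OF linF] linear_scale[OF linF])
  obtain k :: 'n where True by blast
  have ax: "axis k (1::real) \<noteq> 0" by simp
  obtain u where uS: "u \<in> UNIV" and un: "u \<noteq> 0" and Cu: "C u = (u \<bullet> C u) *\<^sub>R u"
    and umax: "\<forall>v\<in>UNIV. v \<bullet> C v \<le> (u \<bullet> C u) * (v \<bullet> v)"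
    using sym_max_eig[OF linC symC subspace_UNIV _ _ ax] by blast
  define mu where "mu = u \<bullet> C u"
  define S2 where "S2 = {v. C v = mu *\<^sub>R v}"
  have sub2: "subspace S2" unfolding S2_def subspace_def
    by (simp add: linear_0[OF linC] linear_add[OF linC] linear_scale[OF linC] scaleR_add_right)
  have inv2: "F x \<in> S2" if "x \<in> S2" for x
    using that unfolding S2_def by (simp add: CF linear_scale[OF linF])
  have uS2: "u \<in> S2" unfolding S2_def mu_def using Cu by simp
  obtain u2 where u2S: "u2 \<in> S2" and u2n: "u2 \<noteq> 0" and Fu2: "F u2 = (u2 \<bullet> F u2) *\<^sub>R u2"
    using sym_max_eig[OF linF symF sub2 inv2 uS2 un] by blast
  define l where "l = u2 \<bullet> F u2"
  have lpos: "l > 0" unfolding l_def F_def using pd u2n by (simp add: pos_def_def)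
  have eig: "is_eigenvalue P l" unfolding is_eigenvalue_def using u2n Fu2 l_def F_def by auto
  have le: "(1 - 2 * eps * l)^2 \<le> rho" using rho_ge eig by blast
  have Fu2': "F u2 = l *\<^sub>R u2" using Fu2 l_def by simp
  have Au2: "A u2 = (1 - 2*eps*l) *\<^sub>R u2" unfolding A_def by (simp add: Fu2' algebra_simps)
  have "A (F (A u2)) = ((1 - 2*eps*l) * l * (1 - 2*eps*l)) *\<^sub>R u2"
    by (simp add: Au2 Fu2' linear_scale[OF linF] linear_scale[OF linA])
  then have "C u2 = (l * (1 - 2*eps*l)^2 - rho * l) *\<^sub>R u2"
    unfolding C_def by (simp add: Fu2' power2_eq_square algebra_simps)
  moreover have "C u2 = mu *\<^sub>R u2" using u2S unfolding S2_def by simp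
  ultimately have "mu = l * (1 - 2*eps*l)^2 - rho * l" using u2n by (metis scaleR_cancel_right)
  also have "\<dots> = l * ((1 - 2*eps*l)^2 - rho)" by (simp add: algebra_simps)
  also have "\<dots> \<le> 0" using lpos le by (simp add: mult_nonneg_nonpos)
  finally have mu0: "mu \<le> 0" .
  have "x \<bullet> C x \<le> mu * (x \<bullet> x)" using umax mu_def by auto
  also have "\<dots> \<le> 0" using mu0 by (simp add: mult_nonpos_nonneg)
  finally have "x \<bullet> C x \<le> 0" .
  moreover have "x \<bullet> C x = A x \<bullet> F (A x) - rho * (x \<bullet> F x)"
    unfolding C_def by (simp add: inner_diff_right symA)
  ultimately show ?thesis unfolding A_def F_def by simp
qed




lemma abs_mult_le_sq: "\<bar>(a::real) * b\<bar> \<le> a^2 + b^2"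
proof -
  have "0 \<le> (\<bar>a\<bar> - \<bar>b\<bar>)^2" by simp
  then have "2 * (\<bar>a\<bar> * \<bar>b\<bar>) \<le> a^2 + b^2" by (simp add: power2_eq_square algebra_simps)
  moreover have "\<bar>a\<bar> * \<bar>b\<bar> \<ge> 0" by simp
  ultimately have "\<bar>a\<bar> * \<bar>b\<bar> \<le> a^2 + b^2" by linarith
  then show ?thesis by (simp add: abs_mult)
qed

definition sqi :: "'a measure \<Rightarrow> ('a \<Rightarrow> real) \<Rightarrow> bool" where
  "sqi M f \<longleftrightarrow> f \<in> borel_measurable M \<and> integrable M (\<lambda>x. (f x)^2)"

lemma sqi_meas: "sqi M f \<Longrightarrow> f \<in> borel_measurable M" by (simp add: sqi_def)

lemma sqi_mult: assumes "sqi M f" "sqi M g" shows "integrable M (\<lambda>x. f x * g x)"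
proof (rule Bochner_Integration.integrable_bound)
  show "integrable M (\<lambda>x. (f x)^2 + (g x)^2)"
    using assms by (simp add: sqi_def)
  have [measurable]: "f \<in> borel_measurable M" "g \<in> borel_measurable M" using assms by (auto simp: sqi_def)
  show "(\<lambda>x. f x * g x) \<in> borel_measurable M" by measurable
  show "AE x in M. norm (f x * g x) \<le> norm ((f x)^2 + (g x)^2)"
    using abs_mult_le_sq by (intro AE_I2) simp
qed

lemma sqi_add: assumes "sqi M f" "sqi M g" shows "sqi M (\<lambda>x. f x + g x)"
proof -
  have [measurable]: "f \<in> borel_measurable M" "g \<in> borel_measurable M" using assms by (auto simp: sqi_def)
  have m: "(\<lambda>x. f x + g x) \<in> borel_measurable M" by measurable
  have "integrable M (\<lambda>x. (f x + g x)^2)"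
  proof (rule Bochner_Integration.integrable_bound)
    show "integrable M (\<lambda>x. 2 * (f x)^2 + 2 * (g x)^2)"
      using assms by (simp add: sqi_def)
    show "(\<lambda>x. (f x + g x)^2) \<in> borel_measurable M" using m by simp
    show "AE x in M. norm ((f x + g x)^2) \<le> norm (2 * (f x)^2 + 2 * (g x)^2)"
    proof (intro AE_I2)
      fix x
      have "(f x + g x)^2 \<le> 2 * (f x)^2 + 2 * (g x)^2"
      proof -
        have "0 \<le> (f x - g x)^2" by simp
        then show ?thesis by (simp add: power2_eq_square algebra_simps)
      qed
      then show "norm ((f x + g x)^2) \<le> norm (2 * (f x)^2 + 2 * (g x)^2)" by simp
    qed
  qed
  with m show ?thesis by (simp add: sqi_def)
qed

lemma sqi_cmult: assumes "sqi M f" shows "sqi M (\<lambda>x. c * f x)"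
proof -
  have [measurable]: "f \<in> borel_measurable M" using assms by (auto simp: sqi_def)
  have "(\<lambda>x. c * f x) \<in> borel_measurable M" by measurable
  then show ?thesis using assms by (simp add: sqi_def power_mult_distrib)
qed

lemma sqi_uminus: assumes "sqi M f" shows "sqi M (\<lambda>x. - f x)"
  using assms by (simp add: sqi_def)

lemma sqi_diff: assumes "sqi M f" "sqi M g" shows "sqi M (\<lambda>x. f x - g x)"
  using sqi_add[OF assms(1) sqi_uminus[OF assms(2)]] by simp

lemma sqi_const: assumes "finite_measure M" shows "sqi M (\<lambda>x. c)"
  using assms by (simp add: sqi_def finite_measure.integrable_const)

lemma sqi_zero: "sqi M (\<lambda>x. 0)" by (simp add: sqi_def)

lemma sqi_sum: assumes "finite I" "\<And>i. i \<in> I \<Longrightarrow> sqi M (f i)" shows "sqi M (\<lambda>x. \<Sum>i\<in>I. f i x)"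
  using assms by (induction I rule: finite_induct) (auto intro: sqi_add sqi_zero)

lemma qexp:
  fixes P :: "real^'n^'n"
  shows "(D - e *\<^sub>R H) \<bullet> (P *v (D - e *\<^sub>R H)) - D \<bullet> (P *v D)
    = (\<Sum>i\<in>UNIV. \<Sum>j\<in>UNIV. P$i$j * (- e * (H$i * D$j) - e * (D$i * H$j) + e^2 * (H$i * H$j)))"
proof -
  have q: "x \<bullet> (P *v x) = (\<Sum>i\<in>UNIV. \<Sum>j\<in>UNIV. P$i$j * (x$i * x$j))" for x :: "real^'n"
    by (simp add: inner_vec_def matrix_vector_mult_def sum_distrib_left mult_ac)
  have "(\<Sum>i\<in>UNIV. \<Sum>j\<in>UNIV. P$i$j * ((D - e *\<^sub>R H)$i * (D - e *\<^sub>R H)$j))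
     - (\<Sum>i\<in>UNIV. \<Sum>j\<in>UNIV. P$i$j * (D$i * D$j))
     = (\<Sum>i\<in>UNIV. \<Sum>j\<in>UNIV. P$i$j * ((D - e *\<^sub>R H)$i * (D - e *\<^sub>R H)$j) - P$i$j * (D$i * D$j))"
    by (simp add: sum_subtractf)
  also have "\<dots> = (\<Sum>i\<in>UNIV. \<Sum>j\<in>UNIV. P$i$j * (- e * (H$i * D$j) - e * (D$i * H$j) + e^2 * (H$i * H$j)))"
  proof (intro sum.cong refl)
    fix i j
    show "P$i$j * ((D - e *\<^sub>R H)$i * (D - e *\<^sub>R H)$j) - P$i$j * (D$i * D$j)
      = P$i$j * (- e * (H$i * D$j) - e * (D$i * H$j) + e^2 * (H$i * H$j))"
      by (simp add: power2_eq_square algebra_simps)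
  qed
  finally show ?thesis unfolding q .
qed




context
  fixes d :: "'x measure" and V :: "'x \<Rightarrow> real" and phi :: "'x \<Rightarrow> real^'n"
  assumes d: "prob_space d"
    and phi_meas: "phi \<in> borel_measurable d" and V_meas: "V \<in> borel_measurable d"
    and phi_L2: "integrable d (\<lambda>x. (norm (phi x))^2)"
    and V_L2: "integrable d (\<lambda>x. (V x)^2)"
begin

lemma phi_comp_meas[measurable]: "(\<lambda>x. phi x $ i) \<in> borel_measurable d"
  using measurable_compose[OF phi_meas borel_measurable_nth] by simp

lemma V_meas'[measurable]: "V \<in> borel_measurable d" by (rule V_meas)

lemma int_pp: "integrable d (\<lambda>x. phi x $ i * phi x $ j)"
proof (rule Bochner_Integration.integrable_bound[OF phi_L2])
  show "(\<lambda>x. phi x $ i * phi x $ j) \<in> borel_measurable d" by measurable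
  show "AE x in d. norm (phi x $ i * phi x $ j) \<le> norm ((norm (phi x))^2)"
  proof (rule AE_I2)
    fix x
    have "\<bar>phi x $ i\<bar> * \<bar>phi x $ j\<bar> \<le> norm (phi x) * norm (phi x)"
      by (intro mult_mono component_le_norm_cart) auto
    then show "norm (phi x $ i * phi x $ j) \<le> norm ((norm (phi x))^2)"
      by (simp add: abs_mult power2_eq_square)
  qed
qed

lemma int_Vp: "integrable d (\<lambda>x. V x * phi x $ i)"
proof (rule Bochner_Integration.integrable_bound[OF Bochner_Integration.integrable_add[OF V_L2 phi_L2]])
  show "(\<lambda>x. V x * phi x $ i) \<in> borel_measurable d" by measurable
  show "AE x in d. norm (V x * phi x $ i) \<le> norm ((V x)^2 + (norm (phi x))^2)"
  proof (rule AE_I2)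
    fix x
    have "\<bar>phi x $ i\<bar>^2 \<le> (norm (phi x))^2"
      by (intro power_mono component_le_norm_cart) auto
    then have "(phi x $ i)^2 \<le> (norm (phi x))^2" by simp
    moreover have "\<bar>V x * phi x $ i\<bar> \<le> (V x)^2 + (phi x $ i)^2" by (rule abs_mult_le_sq)
    moreover have "norm ((V x)^2 + (norm (phi x))^2) = (V x)^2 + (norm (phi x))^2" by simp
    ultimately show "norm (V x * phi x $ i) \<le> norm ((V x)^2 + (norm (phi x))^2)"
      by (simp only: real_norm_def)
  qed
qed

lemma J_expand:
  "Jobj d V phi v = (\<integral>x. (V x)^2 \<partial>d) - 2 * ((\<chi> i. \<integral>x. V x * phi x $ i \<partial>d) \<bullet> v)
     + v \<bullet> (Phi_mat d phi *v v)"
proof -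
  have pw: "(V x - v \<bullet> phi x)^2 = (V x)^2 - 2 * (\<Sum>i\<in>UNIV. v$i * (V x * phi x $ i))
      + (\<Sum>i\<in>UNIV. \<Sum>j\<in>UNIV. v$i * v$j * (phi x $ i * phi x $ j))" for x
  proof -
    have "(v \<bullet> phi x)^2 = (\<Sum>i\<in>UNIV. v$i * phi x $ i) * (\<Sum>j\<in>UNIV. v$j * phi x $ j)"
      by (simp add: inner_vec_def power2_eq_square)
    also have "\<dots> = (\<Sum>i\<in>UNIV. \<Sum>j\<in>UNIV. v$i * v$j * (phi x $ i * phi x $ j))"
      unfolding sum_product by (intro sum.cong refl) (simp add: mult_ac)
    finally have sq: "(v \<bullet> phi x)^2 = \<dots>" .
    have lin: "V x * (v \<bullet> phi x) = (\<Sum>i\<in>UNIV. v$i * (V x * phi x $ i))"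
      by (simp add: inner_vec_def sum_distrib_left mult_ac)
    have "(V x - v \<bullet> phi x)^2 = (V x)^2 - 2 * (V x * (v \<bullet> phi x)) + (v \<bullet> phi x)^2"
      by (simp add: power2_diff)
    also have "\<dots> = (V x)^2 - 2 * (\<Sum>i\<in>UNIV. v$i * (V x * phi x $ i))
      + (\<Sum>i\<in>UNIV. \<Sum>j\<in>UNIV. v$i * v$j * (phi x $ i * phi x $ j))"
      by (simp only: sq lin)
    finally show ?thesis .
  qed
  have i1: "integrable d (\<lambda>x. \<Sum>i\<in>UNIV. v$i * (V x * phi x $ i))"
    by (intro Bochner_Integration.integrable_sum integrable_mult_right int_Vp)
  have i2: "integrable d (\<lambda>x. \<Sum>i\<in>UNIV. \<Sum>j\<in>UNIV. v$i * v$j * (phi x $ i * phi x $ j))"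
    by (intro Bochner_Integration.integrable_sum integrable_mult_right int_pp)
  have "Jobj d V phi v = (\<integral>x. (V x)^2 - 2 * (\<Sum>i\<in>UNIV. v$i * (V x * phi x $ i))
      + (\<Sum>i\<in>UNIV. \<Sum>j\<in>UNIV. v$i * v$j * (phi x $ i * phi x $ j)) \<partial>d)"
    unfolding Jobj_def pw ..
  also have "\<dots> = (\<integral>x. (V x)^2 \<partial>d) - 2 * (\<Sum>i\<in>UNIV. v$i * (\<integral>x. V x * phi x $ i \<partial>d))
      + (\<Sum>i\<in>UNIV. \<Sum>j\<in>UNIV. v$i * v$j * (\<integral>x. phi x $ i * phi x $ j \<partial>d))"
  proof -
    have i3: "integrable d (\<lambda>x. (V x)^2 - 2 * (\<Sum>i\<in>UNIV. v$i * (V x * phi x $ i)))"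
      by (intro Bochner_Integration.integrable_diff integrable_mult_right V_L2 i1)
    have "(\<integral>x. (V x)^2 - 2 * (\<Sum>i\<in>UNIV. v$i * (V x * phi x $ i))
      + (\<Sum>i\<in>UNIV. \<Sum>j\<in>UNIV. v$i * v$j * (phi x $ i * phi x $ j)) \<partial>d)
      = (\<integral>x. (V x)^2 - 2 * (\<Sum>i\<in>UNIV. v$i * (V x * phi x $ i)) \<partial>d)
      + (\<integral>x. (\<Sum>i\<in>UNIV. \<Sum>j\<in>UNIV. v$i * v$j * (phi x $ i * phi x $ j)) \<partial>d)"
      by (rule Bochner_Integration.integral_add[OF i3 i2])
    also have "(\<integral>x. (V x)^2 - 2 * (\<Sum>i\<in>UNIV. v$i * (V x * phi x $ i)) \<partial>d)
      = (\<integral>x. (V x)^2 \<partial>d) - (\<integral>x. 2 * (\<Sum>i\<in>UNIV. v$i * (V x * phi x $ i)) \<partial>d)"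
      by (rule Bochner_Integration.integral_diff[OF V_L2 integrable_mult_right[OF i1]])
    also have "(\<integral>x. 2 * (\<Sum>i\<in>UNIV. v$i * (V x * phi x $ i)) \<partial>d)
       = 2 * (\<Sum>i\<in>UNIV. v$i * (\<integral>x. V x * phi x $ i \<partial>d))"
      using int_Vp by (simp add: Bochner_Integration.integral_sum)
    also have "(\<integral>x. (\<Sum>i\<in>UNIV. \<Sum>j\<in>UNIV. v$i * v$j * (phi x $ i * phi x $ j)) \<partial>d)
       = (\<Sum>i\<in>UNIV. \<Sum>j\<in>UNIV. v$i * v$j * (\<integral>x. phi x $ i * phi x $ j \<partial>d))"
      using int_pp by (simp add: Bochner_Integration.integral_sum Bochner_Integration.integrable_sum)
    finally show ?thesis .
  qed
  also have "\<dots> = (\<integral>x. (V x)^2 \<partial>d) - 2 * ((\<chi> i. \<integral>x. V x * phi x $ i \<partial>d) \<bullet> v)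
     + v \<bullet> (Phi_mat d phi *v v)"
    by (simp add: inner_vec_def matrix_vector_mult_def Phi_mat_def sum_distrib_left mult_ac)
  finally show ?thesis .
qed

lemma J_nonneg: "Jobj d V phi v \<ge> 0"
  unfolding Jobj_def by simp

end

lemma Phi_sym: "Phi_mat d phi $ i $ j = Phi_mat d phi $ j $ i"
  unfolding Phi_mat_def by (simp add: mult.commute)

lemma mv_scale: "(P::real^'n^'m) *v (k *\<^sub>R x) = k *\<^sub>R (P *v x)"
  by (simp add: matrix_scaleR_vector_ac scaleR_matrix_vector_assoc)

lemma quad_min:
  fixes P :: "real^'n^'n" and J :: "real^'n \<Rightarrow> real"
  assumes symP: "\<And>i j. P$i$j = P$j$i"
    and Jq: "\<And>v. J v = c - 2 * (b \<bullet> v) + v \<bullet> (P *v v)"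
    and min: "\<forall>v. J ws \<le> J v"
  shows "J v = J ws + (v - ws) \<bullet> (P *v (v - ws))"
proof -
  have sy: "\<And>x y. x \<bullet> (P *v y) = (P *v x) \<bullet> y" by (rule sym_mat_inner[OF symP])
  have Pb: "P *v ws = b"
  proof -
    define u where "u = P *v ws - b"
    have "(- 2 * (u \<bullet> (P *v ws - b))) * t + (- (u \<bullet> (P *v u))) * t^2 \<le> 0" for t
    proof -
      have "J (ws + t *\<^sub>R u) - J ws = 2 * t * (u \<bullet> (P *v ws - b)) + t^2 * (u \<bullet> (P *v u))"
      proof -
        have e1: "ws \<bullet> (P *v u) = u \<bullet> (P *v ws)" using sy[of ws u] by (simp add: inner_commute)
        have e2: "b \<bullet> u = u \<bullet> b" by (rule inner_commute)
        show ?thesis unfolding Jq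
          by (simp add: matrix_vector_right_distrib mv_scale inner_add_left inner_add_right
              inner_diff_right e1 e2 power2_eq_square algebra_simps)
      qed
      moreover have "J (ws + t *\<^sub>R u) - J ws \<ge> 0" using min by simp
      ultimately show ?thesis by (simp add: algebra_simps)
    qed
    then have "- 2 * (u \<bullet> (P *v ws - b)) = 0" by (rule quad_zero)
    then have "u \<bullet> u = 0" unfolding u_def by simp
    then show ?thesis unfolding u_def by simp
  qed
  have e3: "ws \<bullet> (P *v v) = v \<bullet> (P *v ws)" using sy[of ws v] by (simp add: inner_commute)
  have e4: "b \<bullet> v = v \<bullet> (P *v ws)" "b \<bullet> ws = ws \<bullet> (P *v ws)" using Pb by (simp_all add: inner_commute)
  show ?thesis unfolding Jq
    by (simp add: matrix_vector_mult_diff_distrib inner_diff_left inner_diff_right e3 e4 algebra_simps)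
qed

lemma grad_quad:
  fixes P :: "real^'n^'n" and J :: "real^'n \<Rightarrow> real"
  assumes symP: "\<And>i j. P$i$j = P$j$i"
    and Jq: "\<And>v. J v = c + (v - ws) \<bullet> (P *v (v - ws))"
  shows "grad J w = 2 *\<^sub>R (P *v (w - ws))"
proof -
  have sy: "\<And>x y. x \<bullet> (P *v y) = (P *v x) \<bullet> y" by (rule sym_mat_inner[OF symP])
  have JJ: "J = (\<lambda>v. c + (v - ws) \<bullet> (P *v (v - ws)))" using Jq by auto
  have bl: "bounded_linear ((*v) P)" by (rule matrix_vector_mul_bounded_linear)
  have d0: "((\<lambda>v. (v - ws) \<bullet> (P *v (v - ws))) has_derivative
      (\<lambda>h. (w - ws) \<bullet> (P *v h) + h \<bullet> (P *v (w - ws)))) (at w)"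
  proof -
    have dd: "((\<lambda>x. x - ws) has_derivative (\<lambda>h. h)) (at w)"
      using has_derivative_diff[OF has_derivative_ident has_derivative_const[of ws]] by simp
    show ?thesis using has_derivative_inner[OF dd bounded_linear.has_derivative[OF bl dd]] by simp
  qed
  have eq: "(\<lambda>h. (w - ws) \<bullet> (P *v h) + h \<bullet> (P *v (w - ws))) = (\<lambda>h. (2 *\<^sub>R (P *v (w - ws))) \<bullet> h)"
  proof (rule ext)
    fix h
    have "(w - ws) \<bullet> (P *v h) = (P *v (w - ws)) \<bullet> h" by (rule sy)
    moreover have "h \<bullet> (P *v (w - ws)) = (P *v (w - ws)) \<bullet> h" by (rule inner_commute)
    ultimately show "(w - ws) \<bullet> (P *v h) + h \<bullet> (P *v (w - ws)) = (2 *\<^sub>R (P *v (w - ws))) \<bullet> h"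
      by simp
  qed
  have D: "(J has_derivative (\<lambda>h. (2 *\<^sub>R (P *v (w - ws))) \<bullet> h)) (at w)"
    unfolding JJ using has_derivative_add[OF has_derivative_const[of c] d0] eq by simp
  show ?thesis unfolding grad_def
  proof (rule the_equality)
    show "(J has_derivative (\<lambda>h. (2 *\<^sub>R (P *v (w - ws))) \<bullet> h)) (at w)" by (rule D)
  next
    fix v assume "(J has_derivative (\<lambda>h. v \<bullet> h)) (at w)"
    from has_derivative_unique[OF this D] have "\<And>h. v \<bullet> h = (2 *\<^sub>R (P *v (w - ws))) \<bullet> h" by metis
    then have "(v - 2 *\<^sub>R (P *v (w - ws))) \<bullet> h = 0" for h by (simp add: inner_diff_left)
    from this[of "v - 2 *\<^sub>R (P *v (w - ws))"] show "v = 2 *\<^sub>R (P *v (w - ws))"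
      by simp
  qed
qed




lemma cond_moments:
  fixes M F :: "'w measure" and g Gr :: "'w \<Rightarrow> real^'n" and G :: "real^'n^'n"
  assumes sfs: "sigma_finite_subalgebra M F" and M: "prob_space M"
    and g: "\<And>j. sqi M (\<lambda>\<omega>. g \<omega> $ j)"
    and Gr: "\<And>j. sqi M (\<lambda>\<omega>. Gr \<omega> $ j)" "\<And>j. (\<lambda>\<omega>. Gr \<omega> $ j) \<in> borel_measurable F"
    and mean: "\<And>j. AE \<omega> in M. real_cond_exp M F (\<lambda>\<omega>. g \<omega> $ j) \<omega> = Gr \<omega> $ j"
    and cov: "\<And>i j. AE \<omega> in M. real_cond_exp M F
            (\<lambda>\<omega>. (g \<omega> $ i - Gr \<omega> $ i) * (g \<omega> $ j - Gr \<omega> $ j)) \<omega> = G $ i $ j"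
  shows "\<And>X j. X \<in> borel_measurable F \<Longrightarrow> sqi M X \<Longrightarrow> (\<integral>\<omega>. X \<omega> * g \<omega> $ j \<partial>M) = (\<integral>\<omega>. X \<omega> * Gr \<omega> $ j \<partial>M)"
    and "\<And>i j. (\<integral>\<omega>. g \<omega> $ i * g \<omega> $ j \<partial>M) = G $ i $ j + (\<integral>\<omega>. Gr \<omega> $ i * Gr \<omega> $ j \<partial>M)"
proof -
  interpret sigma_finite_subalgebra M F by (rule sfs)
  interpret prob_space M by (rule M)
  show A: "(\<integral>\<omega>. X \<omega> * g \<omega> $ j \<partial>M) = (\<integral>\<omega>. X \<omega> * Gr \<omega> $ j \<partial>M)"
    if XF: "X \<in> borel_measurable F" and Xs: "sqi M X" for X j
  proof -
    have int: "integrable M (\<lambda>\<omega>. X \<omega> * g \<omega> $ j)" by (rule sqi_mult[OF Xs g])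
    have gm: "(\<lambda>\<omega>. g \<omega> $ j) \<in> borel_measurable M" using g sqi_meas by blast
    have "(\<integral>\<omega>. X \<omega> * g \<omega> $ j \<partial>M) = (\<integral>\<omega>. X \<omega> * real_cond_exp M F (\<lambda>\<omega>. g \<omega> $ j) \<omega> \<partial>M)"
      using real_cond_exp_intg(2)[OF int XF gm] by simp
    also have "\<dots> = (\<integral>\<omega>. X \<omega> * Gr \<omega> $ j \<partial>M)"
      by (rule integral_cong_AE) (use mean[of j] XF Gr in \<open>auto intro!: measurable_from_subalg[OF subalg]\<close>)
    finally show ?thesis .
  qed
  show "(\<integral>\<omega>. g \<omega> $ i * g \<omega> $ j \<partial>M) = G $ i $ j + (\<integral>\<omega>. Gr \<omega> $ i * Gr \<omega> $ j \<partial>M)" for i j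
  proof -
    have e1: "sqi M (\<lambda>\<omega>. g \<omega> $ i - Gr \<omega> $ i)" by (rule sqi_diff[OF g Gr(1)])
    have e2: "sqi M (\<lambda>\<omega>. g \<omega> $ j - Gr \<omega> $ j)" by (rule sqi_diff[OF g Gr(1)])
    have int: "integrable M (\<lambda>\<omega>. (g \<omega> $ i - Gr \<omega> $ i) * (g \<omega> $ j - Gr \<omega> $ j))"
      by (rule sqi_mult[OF e1 e2])
    have "(\<integral>\<omega>. (g \<omega> $ i - Gr \<omega> $ i) * (g \<omega> $ j - Gr \<omega> $ j) \<partial>M)
        = (\<integral>\<omega>. real_cond_exp M F (\<lambda>\<omega>. (g \<omega> $ i - Gr \<omega> $ i) * (g \<omega> $ j - Gr \<omega> $ j)) \<omega> \<partial>M)"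
      using real_cond_exp_int(2)[OF int] by simp
    also have "\<dots> = (\<integral>\<omega>. G $ i $ j \<partial>M)"
      by (rule integral_cong_AE) (use cov[of i j] in auto)
    also have "\<dots> = G $ i $ j" by (simp add: prob_space)
    finally have c: "(\<integral>\<omega>. (g \<omega> $ i - Gr \<omega> $ i) * (g \<omega> $ j - Gr \<omega> $ j) \<partial>M) = G $ i $ j" .
    have i1: "integrable M (\<lambda>\<omega>. g \<omega> $ i * g \<omega> $ j)" by (rule sqi_mult[OF g g])
    have i2: "integrable M (\<lambda>\<omega>. Gr \<omega> $ i * g \<omega> $ j)" by (rule sqi_mult[OF Gr(1) g])
    have i3: "integrable M (\<lambda>\<omega>. Gr \<omega> $ j * g \<omega> $ i)" by (rule sqi_mult[OF Gr(1) g])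
    have i4: "integrable M (\<lambda>\<omega>. Gr \<omega> $ i * Gr \<omega> $ j)" by (rule sqi_mult[OF Gr(1) Gr(1)])
    have i4': "integrable M (\<lambda>\<omega>. Gr \<omega> $ j * Gr \<omega> $ i)" by (rule sqi_mult[OF Gr(1) Gr(1)])
    have "(\<lambda>\<omega>. (g \<omega> $ i - Gr \<omega> $ i) * (g \<omega> $ j - Gr \<omega> $ j)) =
      (\<lambda>\<omega>. g \<omega> $ i * g \<omega> $ j - Gr \<omega> $ i * g \<omega> $ j - Gr \<omega> $ j * g \<omega> $ i + Gr \<omega> $ i * Gr \<omega> $ j)"
      by (auto simp: algebra_simps)
    with c have "(\<integral>\<omega>. g \<omega> $ i * g \<omega> $ j \<partial>M) - (\<integral>\<omega>. Gr \<omega> $ i * g \<omega> $ j \<partial>M)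
       - (\<integral>\<omega>. Gr \<omega> $ j * g \<omega> $ i \<partial>M) + (\<integral>\<omega>. Gr \<omega> $ i * Gr \<omega> $ j \<partial>M) = G $ i $ j"
      using i1 i2 i3 i4 by (simp add: Bochner_Integration.integral_add Bochner_Integration.integral_diff)
    moreover have "(\<integral>\<omega>. Gr \<omega> $ i * g \<omega> $ j \<partial>M) = (\<integral>\<omega>. Gr \<omega> $ i * Gr \<omega> $ j \<partial>M)"
      by (rule A[OF Gr(2) Gr(1)])
    moreover have "(\<integral>\<omega>. Gr \<omega> $ j * g \<omega> $ i \<partial>M) = (\<integral>\<omega>. Gr \<omega> $ i * Gr \<omega> $ j \<partial>M)"
      using A[OF Gr(2) Gr(1), of j i] by (simp add: mult.commute)
    ultimately show ?thesis by simp
  qed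
qed




lemma int_T:
  assumes H: "\<And>j. sqi M (\<lambda>\<omega>. H \<omega> $ j)" and D: "\<And>j. sqi M (\<lambda>\<omega>. D \<omega> $ j)"
  shows "integrable M (\<lambda>\<omega>. - e * (H \<omega> $ i * D \<omega> $ j) - e * (D \<omega> $ i * H \<omega> $ j) + e^2 * (H \<omega> $ i * H \<omega> $ j))"
    and "(\<integral>\<omega>. - e * (H \<omega> $ i * D \<omega> $ j) - e * (D \<omega> $ i * H \<omega> $ j) + e^2 * (H \<omega> $ i * H \<omega> $ j) \<partial>M)
       = - e * (\<integral>\<omega>. H \<omega> $ i * D \<omega> $ j \<partial>M) - e * (\<integral>\<omega>. D \<omega> $ i * H \<omega> $ j \<partial>M)
         + e^2 * (\<integral>\<omega>. H \<omega> $ i * H \<omega> $ j \<partial>M)"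
proof -
  have i1: "integrable M (\<lambda>\<omega>. H \<omega> $ i * D \<omega> $ j)" by (rule sqi_mult[OF H D])
  have i2: "integrable M (\<lambda>\<omega>. D \<omega> $ i * H \<omega> $ j)" by (rule sqi_mult[OF D H])
  have i3: "integrable M (\<lambda>\<omega>. H \<omega> $ i * H \<omega> $ j)" by (rule sqi_mult[OF H H])
  show "integrable M (\<lambda>\<omega>. - e * (H \<omega> $ i * D \<omega> $ j) - e * (D \<omega> $ i * H \<omega> $ j) + e^2 * (H \<omega> $ i * H \<omega> $ j))"
    using i1 i2 i3 by simp
  show "(\<integral>\<omega>. - e * (H \<omega> $ i * D \<omega> $ j) - e * (D \<omega> $ i * H \<omega> $ j) + e^2 * (H \<omega> $ i * H \<omega> $ j) \<partial>M)
       = - e * (\<integral>\<omega>. H \<omega> $ i * D \<omega> $ j \<partial>M) - e * (\<integral>\<omega>. D \<omega> $ i * H \<omega> $ j \<partial>M)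
         + e^2 * (\<integral>\<omega>. H \<omega> $ i * H \<omega> $ j \<partial>M)"
    using i1 i2 i3 by (simp add: Bochner_Integration.integral_add Bochner_Integration.integral_diff)
qed

lemma int_Q:
  fixes P :: "real^'n^'n"
  assumes H: "\<And>j. sqi M (\<lambda>\<omega>. H \<omega> $ j)" and D: "\<And>j. sqi M (\<lambda>\<omega>. D \<omega> $ j)"
  shows "integrable M (\<lambda>\<omega>. (D \<omega> - e *\<^sub>R H \<omega>) \<bullet> (P *v (D \<omega> - e *\<^sub>R H \<omega>)) - D \<omega> \<bullet> (P *v D \<omega>))"
    and "(\<integral>\<omega>. (D \<omega> - e *\<^sub>R H \<omega>) \<bullet> (P *v (D \<omega> - e *\<^sub>R H \<omega>)) - D \<omega> \<bullet> (P *v D \<omega>) \<partial>M)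
      = (\<Sum>i\<in>UNIV. \<Sum>j\<in>UNIV. P$i$j * (\<integral>\<omega>. - e * (H \<omega> $ i * D \<omega> $ j) - e * (D \<omega> $ i * H \<omega> $ j) + e^2 * (H \<omega> $ i * H \<omega> $ j) \<partial>M))"
  unfolding qexp
  using int_T(1)[OF H D] by (simp_all add: Bochner_Integration.integral_sum Bochner_Integration.integrable_sum)

lemma exp_x:
  fixes M F :: "'w measure" and g Gr D :: "'w \<Rightarrow> real^'n" and G P :: "real^'n^'n"
  assumes sfs: "sigma_finite_subalgebra M F" and M: "prob_space M"
    and g: "\<And>j. sqi M (\<lambda>\<omega>. g \<omega> $ j)"
    and Gr: "\<And>j. sqi M (\<lambda>\<omega>. Gr \<omega> $ j)" "\<And>j. (\<lambda>\<omega>. Gr \<omega> $ j) \<in> borel_measurable F"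
    and D: "\<And>j. sqi M (\<lambda>\<omega>. D \<omega> $ j)" "\<And>j. (\<lambda>\<omega>. D \<omega> $ j) \<in> borel_measurable F"
    and mean: "\<And>j. AE \<omega> in M. real_cond_exp M F (\<lambda>\<omega>. g \<omega> $ j) \<omega> = Gr \<omega> $ j"
    and cov: "\<And>i j. AE \<omega> in M. real_cond_exp M F
            (\<lambda>\<omega>. (g \<omega> $ i - Gr \<omega> $ i) * (g \<omega> $ j - Gr \<omega> $ j)) \<omega> = G $ i $ j"
  shows "integrable M (\<lambda>\<omega>. (D \<omega> - e *\<^sub>R g \<omega>) \<bullet> (P *v (D \<omega> - e *\<^sub>R g \<omega>)) - D \<omega> \<bullet> (P *v D \<omega>))"
    and "integrable M (\<lambda>\<omega>. (D \<omega> - e *\<^sub>R Gr \<omega>) \<bullet> (P *v (D \<omega> - e *\<^sub>R Gr \<omega>)) - D \<omega> \<bullet> (P *v D \<omega>))"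
    and "(\<integral>\<omega>. (D \<omega> - e *\<^sub>R g \<omega>) \<bullet> (P *v (D \<omega> - e *\<^sub>R g \<omega>)) - D \<omega> \<bullet> (P *v D \<omega>) \<partial>M)
       = (\<integral>\<omega>. (D \<omega> - e *\<^sub>R Gr \<omega>) \<bullet> (P *v (D \<omega> - e *\<^sub>R Gr \<omega>)) - D \<omega> \<bullet> (P *v D \<omega>) \<partial>M)
         + e^2 * (\<Sum>i\<in>UNIV. \<Sum>j\<in>UNIV. P$i$j * G$i$j)"
proof -
  note cm = cond_moments[OF sfs M g Gr mean cov]
  show "integrable M (\<lambda>\<omega>. (D \<omega> - e *\<^sub>R g \<omega>) \<bullet> (P *v (D \<omega> - e *\<^sub>R g \<omega>)) - D \<omega> \<bullet> (P *v D \<omega>))"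
    by (rule int_Q(1)[OF g D(1)])
  show "integrable M (\<lambda>\<omega>. (D \<omega> - e *\<^sub>R Gr \<omega>) \<bullet> (P *v (D \<omega> - e *\<^sub>R Gr \<omega>)) - D \<omega> \<bullet> (P *v D \<omega>))"
    by (rule int_Q(1)[OF Gr(1) D(1)])
  have termwise: "(\<integral>\<omega>. - e * (g \<omega> $ i * D \<omega> $ j) - e * (D \<omega> $ i * g \<omega> $ j) + e^2 * (g \<omega> $ i * g \<omega> $ j) \<partial>M)
     = (\<integral>\<omega>. - e * (Gr \<omega> $ i * D \<omega> $ j) - e * (D \<omega> $ i * Gr \<omega> $ j) + e^2 * (Gr \<omega> $ i * Gr \<omega> $ j) \<partial>M)
       + e^2 * G$i$j" for i j
  proof -
    have a1: "(\<integral>\<omega>. g \<omega> $ i * D \<omega> $ j \<partial>M) = (\<integral>\<omega>. Gr \<omega> $ i * D \<omega> $ j \<partial>M)"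
      using cm(1)[OF D(2) D(1), of j i] by (simp add: mult.commute)
    have a2: "(\<integral>\<omega>. D \<omega> $ i * g \<omega> $ j \<partial>M) = (\<integral>\<omega>. D \<omega> $ i * Gr \<omega> $ j \<partial>M)"
      using cm(1)[OF D(2) D(1), of i j] by simp
    show ?thesis unfolding int_T(2)[OF g D(1)] int_T(2)[OF Gr(1) D(1)] a1 a2 cm(2)
      by (simp add: algebra_simps)
  qed
  show "(\<integral>\<omega>. (D \<omega> - e *\<^sub>R g \<omega>) \<bullet> (P *v (D \<omega> - e *\<^sub>R g \<omega>)) - D \<omega> \<bullet> (P *v D \<omega>) \<partial>M)
       = (\<integral>\<omega>. (D \<omega> - e *\<^sub>R Gr \<omega>) \<bullet> (P *v (D \<omega> - e *\<^sub>R Gr \<omega>)) - D \<omega> \<bullet> (P *v D \<omega>) \<partial>M)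
         + e^2 * (\<Sum>i\<in>UNIV. \<Sum>j\<in>UNIV. P$i$j * G$i$j)"
    unfolding int_Q(2)[OF g D(1)] int_Q(2)[OF Gr(1) D(1)] termwise
    by (simp add: sum_distrib_left distrib_left sum.distrib mult_ac)
qed




lemma convex_q:
  fixes P :: "real^'n^'n"
  assumes symP: "\<And>i j. P$i$j = P$j$i" and psd: "\<And>x. x \<bullet> (P *v x) \<ge> 0"
  shows "((1/2) *\<^sub>R (a + b)) \<bullet> (P *v ((1/2) *\<^sub>R (a + b))) \<le> (a \<bullet> (P *v a) + b \<bullet> (P *v b)) / 2"
proof -
  have sy: "b \<bullet> (P *v a) = a \<bullet> (P *v b)" using sym_mat_inner[OF symP, of b a] by (simp add: inner_commute)
  have e1: "((1/2) *\<^sub>R (a + b)) \<bullet> (P *v ((1/2) *\<^sub>R (a + b))) = (a \<bullet> (P *v a) + 2 * (a \<bullet> (P *v b)) + b \<bullet> (P *v b)) / 4"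
    by (simp add: matrix_scaleR_vector_ac scaleR_matrix_vector_assoc[symmetric] matrix_vector_right_distrib
        inner_add_left inner_add_right sy) (simp add: field_simps)
  have e2: "(a - b) \<bullet> (P *v (a - b)) = a \<bullet> (P *v a) - 2 * (a \<bullet> (P *v b)) + b \<bullet> (P *v b)"
    by (simp add: matrix_vector_mult_diff_distrib inner_diff_left inner_diff_right sy)
  show ?thesis using psd[of "a - b"] unfolding e1 e2 by simp
qed

lemma step_ineq:
  fixes J :: "real^'n \<Rightarrow> real" and eps lam rho :: real and N k :: nat and w g1 g2 :: "real^'n"
  assumes conv: "\<And>u1 u2. J ((1/2) *\<^sub>R (u1 + u2)) \<le> (J u1 + J u2) / 2"
    and rho: "rho > 0" and N: "N \<ge> 1" and lam: "lam \<ge> 0"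
  defines "a1 \<equiv> alpha J eps lam rho N k w g1" and "a2 \<equiv> alpha J eps lam rho N k w g2"
  shows "rho^(N-1-k) * (J (upd eps a1 a2 w g1 g2) - J w) + lam * ((a1 + a2) / (2 * real N))
    \<le> rho^(N-1-k) * (((J (w - eps *\<^sub>R g1) - J w) + (J (w - eps *\<^sub>R g2) - J w)) / 2) + lam / real N"
proof -
  define c where "c = rho^(N-1-k)"
  define T where "T = lam / (c * real N)"
  define x1 where "x1 = J (w - eps *\<^sub>R g1) - J w"
  define x2 where "x2 = J (w - eps *\<^sub>R g2) - J w"
  have c: "c > 0" unfolding c_def using rho by simp
  have Npos: "real N > 0" using N by simp
  have T0: "T \<ge> 0" unfolding T_def using c Npos lam by simp
  have cT: "lam / real N = c * T" unfolding T_def using c Npos by simp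
  have a1: "a1 = (if x1 \<le> - T then 1 else 0)" unfolding a1_def alpha_def x1_def T_def c_def ..
  have a2: "a2 = (if x2 \<le> - T then 1 else 0)" unfolding a2_def alpha_def x2_def T_def c_def ..
  have mid: "w - (eps / 2) *\<^sub>R (g1 + g2) = (1/2) *\<^sub>R ((w - eps *\<^sub>R g1) + (w - eps *\<^sub>R g2))"
    by (simp add: vec_eq_iff field_simps)
  have inner: "(J (upd eps a1 a2 w g1 g2) - J w) + T * ((a1 + a2) / 2) \<le> (x1 + x2) / 2 + T"
  proof (cases "x1 \<le> - T"; cases "x2 \<le> - T")
    assume h1: "x1 \<le> - T" and h2: "x2 \<le> - T"
    have aa: "a1 = 1" "a2 = 1" using h1 h2 a1 a2 by simp_all
    have "J (upd eps a1 a2 w g1 g2) = J (w - (eps / 2) *\<^sub>R (g1 + g2))"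
      using aa unfolding upd_def by simp
    also have "\<dots> \<le> (J (w - eps *\<^sub>R g1) + J (w - eps *\<^sub>R g2)) / 2" unfolding mid by (rule conv)
    finally have "J (upd eps a1 a2 w g1 g2) - J w \<le> (x1 + x2) / 2" unfolding x1_def x2_def by simp
    then show ?thesis using aa by simp
  next
    assume h1: "x1 \<le> - T" and h2: "\<not> x2 \<le> - T"
    have aa: "a1 = 1" "a2 = 0" using h1 h2 a1 a2 by simp_all
    have "J (upd eps a1 a2 w g1 g2) - J w = x1"
      using aa unfolding upd_def x1_def by simp
    moreover have "x1 + T/2 \<le> (x1+x2)/2 + T" using h1 h2 T0 by (simp add: field_simps)
    ultimately show ?thesis using aa by simp
  next
    assume h1: "\<not> x1 \<le> - T" and h2: "x2 \<le> - T"
    have aa: "a1 = 0" "a2 = 1" using h1 h2 a1 a2 by simp_all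
    have "J (upd eps a1 a2 w g1 g2) - J w = x2"
      using aa unfolding upd_def x2_def by simp
    moreover have "x2 + T/2 \<le> (x1+x2)/2 + T" using h1 h2 T0 by (simp add: field_simps)
    ultimately show ?thesis using aa by simp
  next
    assume h1: "\<not> x1 \<le> - T" and h2: "\<not> x2 \<le> - T"
    have aa: "a1 = 0" "a2 = 0" using h1 h2 a1 a2 by simp_all
    have "J (upd eps a1 a2 w g1 g2) - J w = 0"
      using aa unfolding upd_def by simp
    moreover have "0 \<le> (x1+x2)/2 + T" using h1 h2 T0 by (simp add: field_simps)
    ultimately show ?thesis using aa by simp
  qed
  have m: "c * ((J (upd eps a1 a2 w g1 g2) - J w) + T * ((a1 + a2) / 2)) \<le> c * ((x1 + x2) / 2 + T)"
    using mult_left_mono[OF inner] c by simp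
  have e: "lam * ((a1 + a2) / (2 * real N)) = c * (T * ((a1 + a2) / 2))"
    unfolding T_def using c Npos by (simp add: field_simps)
  have l: "rho^(N-1-k) * (J (upd eps a1 a2 w g1 g2) - J w) + lam * ((a1 + a2) / (2 * real N))
     = c * ((J (upd eps a1 a2 w g1 g2) - J w) + T * ((a1 + a2) / 2))"
    unfolding e c_def by (simp add: distrib_left)
  have r: "c * ((x1 + x2) / 2 + T) = rho^(N-1-k) * (((J (w - eps *\<^sub>R g1) - J w) + (J (w - eps *\<^sub>R g2) - J w)) / 2) + lam / real N"
    unfolding cT c_def x1_def x2_def by (simp add: distrib_left)
  show ?thesis using m unfolding l r .
qed

lemma alpha_nonneg: "alpha J eps lam rho N k w g \<ge> 0"
  unfolding alpha_def by simp

lemma upd_comp_bound: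
  assumes "eps \<ge> 0" and "a1 = alpha J eps lam rho N k w g1" and "a2 = alpha J eps lam rho N k w g2"
  shows "\<bar>upd eps a1 a2 w g1 g2 $ i\<bar> \<le> \<bar>w $ i\<bar> + eps * \<bar>g1 $ i\<bar> + eps * \<bar>g2 $ i\<bar>"
proof -
  have f: "eps * g1$i \<le> eps*\<bar>g1$i\<bar>" "- (eps*g1$i) \<le> eps*\<bar>g1$i\<bar>"
          "eps * g2$i \<le> eps*\<bar>g2$i\<bar>" "- (eps*g2$i) \<le> eps*\<bar>g2$i\<bar>"
          "0 \<le> eps*\<bar>g1$i\<bar>" "0 \<le> eps*\<bar>g2$i\<bar>"
    using mult_left_mono[OF abs_ge_self assms(1), of "g1$i"] mult_left_mono[OF abs_ge_minus_self assms(1), of "g1$i"]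
      mult_left_mono[OF abs_ge_self assms(1), of "g2$i"] mult_left_mono[OF abs_ge_minus_self assms(1), of "g2$i"]
      assms(1) by auto
  have "upd eps a1 a2 w g1 g2 $ i = w$i - eps * g1$i \<or> upd eps a1 a2 w g1 g2 $ i = w$i - eps * g2$i
     \<or> upd eps a1 a2 w g1 g2 $ i = w$i - (eps * g1$i + eps * g2$i) / 2 \<or> upd eps a1 a2 w g1 g2 $ i = w$i"
    unfolding upd_def by (auto simp: algebra_simps)
  then show ?thesis using f abs_ge_self[of "w$i"] abs_ge_minus_self[of "w$i"] by (auto simp: abs_le_iff field_simps)
qed




lemma telescope:
  fixes Jk x a :: "nat \<Rightarrow> real" and rho lam Jws :: real and N :: nat
  assumes N: "N \<ge> 1"
    and step: "\<And>k. k < N \<Longrightarrow> rho^(N-1-k) * (Jk (Suc k) - Jk k) + lam * a k \<le> rho^(N-1-k) * x k + lam / real N"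
  shows "lam * (\<Sum>k<N. a k) + Jk N \<le> lam + Jws + rho^N * (Jk 0 - Jws)
           + (\<Sum>k<N. rho^(N-1-k) * (x k + (1 - rho) * (Jk k - Jws)))"
proof -
  have claim: "rho^(N-m) * (Jk m - Jws) + lam * (\<Sum>k<m. a k) \<le> rho^N * (Jk 0 - Jws)
      + (\<Sum>k<m. rho^(N-1-k) * (x k + (1 - rho) * (Jk k - Jws)) + lam / real N)" if "m \<le> N" for m
    using that
  proof (induction m)
    case 0 then show ?case by simp
  next
    case (Suc m)
    then have mN: "m < N" by simp
    define c where "c = rho^(N-1-m)"
    have pw: "rho^(N-m) = rho * c" unfolding c_def using mN
      by (metis Suc_diff_Suc diff_Suc_1 diff_diff_left plus_1_eq_Suc power_Suc)
    have pw2: "rho^(N - Suc m) = c" unfolding c_def by simp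
    have IH: "rho * c * (Jk m - Jws) + lam * (\<Sum>k<m. a k) \<le> rho^N * (Jk 0 - Jws)
      + (\<Sum>k<m. rho^(N-1-k) * (x k + (1 - rho) * (Jk k - Jws)) + lam / real N)"
      using Suc.IH mN pw by simp
    have st: "c * (Jk (Suc m) - Jk m) + lam * a m \<le> c * x m + lam / real N"
      using step[OF mN] unfolding c_def .
    have eq: "c * (Jk (Suc m) - Jws) + lam * (\<Sum>k<Suc m. a k)
       = (c * (Jk (Suc m) - Jk m) + lam * a m) + (rho * c * (Jk m - Jws) + lam * (\<Sum>k<m. a k))
         + c * (1 - rho) * (Jk m - Jws)"
      by (simp add: algebra_simps)
    have eq2: "(\<Sum>k<Suc m. rho^(N-1-k) * (x k + (1 - rho) * (Jk k - Jws)) + lam / real N)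
       = (\<Sum>k<m. rho^(N-1-k) * (x k + (1 - rho) * (Jk k - Jws)) + lam / real N)
         + (c * x m + lam / real N) + c * (1 - rho) * (Jk m - Jws)"
      unfolding c_def by (simp add: algebra_simps)
    show ?case unfolding pw2 eq eq2 using IH st by linarith
  qed
  have "rho^(N-N) * (Jk N - Jws) + lam * (\<Sum>k<N. a k) \<le> rho^N * (Jk 0 - Jws)
      + (\<Sum>k<N. rho^(N-1-k) * (x k + (1 - rho) * (Jk k - Jws)) + lam / real N)"
    using claim[of N] by simp
  moreover have "(\<Sum>k<N. rho^(N-1-k) * (x k + (1 - rho) * (Jk k - Jws)) + lam / real N)
     = (\<Sum>k<N. rho^(N-1-k) * (x k + (1 - rho) * (Jk k - Jws))) + lam"
    using N by (simp add: sum.distrib)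
  ultimately show ?thesis by simp
qed




lemma meas_alpha:
  fixes X Y :: "'w \<Rightarrow> real^'n"
  assumes [measurable]: "J \<in> borel_measurable borel" "X \<in> borel_measurable L" "Y \<in> borel_measurable L"
  shows "(\<lambda>\<omega>. alpha J eps lam rho N k (X \<omega>) (Y \<omega>)) \<in> borel_measurable L"
  unfolding alpha_def by measurable

lemma meas_upd:
  fixes X Y1 Y2 :: "'w \<Rightarrow> real^'n"
  assumes [measurable]: "J \<in> borel_measurable borel" "X \<in> borel_measurable L" "Y1 \<in> borel_measurable L" "Y2 \<in> borel_measurable L"
  shows "(\<lambda>\<omega>. upd eps (alpha J eps lam rho N k (X \<omega>) (Y1 \<omega>)) (alpha J eps lam rho N k (X \<omega>) (Y2 \<omega>))
            (X \<omega>) (Y1 \<omega>) (Y2 \<omega>)) \<in> borel_measurable L"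
proof -
  have [measurable]: "(\<lambda>\<omega>. alpha J eps lam rho N k (X \<omega>) (Y1 \<omega>)) \<in> borel_measurable L"
      "(\<lambda>\<omega>. alpha J eps lam rho N k (X \<omega>) (Y2 \<omega>)) \<in> borel_measurable L"
    by (intro meas_alpha; fact)+
  show ?thesis unfolding upd_def by measurable
qed




lemma qsum: "x \<bullet> ((P::real^'n^'n) *v x) = (\<Sum>i\<in>UNIV. \<Sum>j\<in>UNIV. P$i$j * (x$i * x$j))"
  by (simp add: inner_vec_def matrix_vector_mult_def sum_distrib_left mult_ac)

lemma sq3: "((a::real) + b + c)^2 \<le> 3 * (a^2 + b^2 + c^2)"
proof -
  have "0 \<le> (a - b)^2 + (b - c)^2 + (a - c)^2" by simp
  then show ?thesis by (simp add: power2_eq_square algebra_simps)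
qed

lemma main_abs:
  fixes J :: "real^'n \<Rightarrow> real" and P G :: "real^'n^'n" and ws w0 :: "real^'n"
    and eps rho lam :: real and N :: nat and M :: "'w measure" and F :: "nat \<Rightarrow> 'w measure"
    and g1 g2 :: "nat \<Rightarrow> 'w \<Rightarrow> real^'n"
  defines "W \<equiv> (\<lambda>k \<omega>. traj J eps lam rho N w0 (\<lambda>i. g1 i \<omega>) (\<lambda>i. g2 i \<omega>) k)"
  assumes Jq: "\<And>v. J v = J ws + (v - ws) \<bullet> (P *v (v - ws))"
    and symP: "\<And>i j. P$i$j = P$j$i"
    and psd: "\<And>x. x \<bullet> (P *v x) \<ge> 0"
    and Jnn: "\<And>v. J v \<ge> 0"
    and contr: "\<And>x. (x - (2*eps) *\<^sub>R (P *v x)) \<bullet> (P *v (x - (2*eps) *\<^sub>R (P *v x))) \<le> rho * (x \<bullet> (P *v x))"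
    and gradJ: "\<And>v. grad J v = 2 *\<^sub>R (P *v (v - ws))"
    and eps: "eps > 0" and rho: "0 < rho" "rho < 1" and lam: "lam > 0" and N: "N \<ge> 1"
    and M: "prob_space M"
    and F_sub: "\<forall>k. sigma_finite_subalgebra M (F k)"
    and F_mono: "\<forall>k. sets (F k) \<subseteq> sets (F (Suc k))"
    and g_meas: "\<forall>k. g1 k \<in> borel_measurable (F (Suc k)) \<and> g2 k \<in> borel_measurable (F (Suc k))"
    and g_L2: "\<forall>k<N. \<forall>j. integrable M (\<lambda>\<omega>. (g1 k \<omega> $ j)^2) \<and> integrable M (\<lambda>\<omega>. (g2 k \<omega> $ j)^2)"
    and g_mean: "\<forall>k<N. \<forall>j.
        (AE \<omega> in M. real_cond_exp M (F k) (\<lambda>\<omega>. g1 k \<omega> $ j) \<omega> = grad J (W k \<omega>) $ j) \<and>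
        (AE \<omega> in M. real_cond_exp M (F k) (\<lambda>\<omega>. g2 k \<omega> $ j) \<omega> = grad J (W k \<omega>) $ j)"
    and g_cov: "\<forall>k<N. \<forall>i j.
        (AE \<omega> in M. real_cond_exp M (F k)
            (\<lambda>\<omega>. (g1 k \<omega> $ i - grad J (W k \<omega>) $ i) * (g1 k \<omega> $ j - grad J (W k \<omega>) $ j)) \<omega> = G $ i $ j) \<and>
        (AE \<omega> in M. real_cond_exp M (F k)
            (\<lambda>\<omega>. (g2 k \<omega> $ i - grad J (W k \<omega>) $ i) * (g2 k \<omega> $ j - grad J (W k \<omega>) $ j)) \<omega> = G $ i $ j)"
  shows "(\<integral>\<^sup>+ \<omega>. ennreal (lam * (\<Sum>k<N. (alpha J eps lam rho N k (W k \<omega>) (g1 k \<omega>)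
            + alpha J eps lam rho N k (W k \<omega>) (g2 k \<omega>)) / (2 * real N)) + J (W N \<omega>)) \<partial>M)
         \<le> ennreal (lam + J ws + rho ^ N * (J w0 - J ws)
                    + (1 - rho ^ N) / (1 - rho) * eps^2 * trace (P ** G))"
proof -
  interpret prob_space M by (rule M)
  have fm: "finite_measure M" by (rule finite_measure_axioms)
  have subFM: "subalgebra M (F k)" for k
    using F_sub sigma_finite_subalgebra.subalg by blast
  have spF: "space (F k) = space M" for k using subFM[of k] by (simp add: subalgebra_def)
  have Fle: "sets (F j) \<subseteq> sets (F k)" if "j \<le> k" for j k
    using lift_Suc_mono_le[of "\<lambda>k. sets (F k)", OF _ that] F_mono by blast
  have subFF: "subalgebra (F k) (F j)" if "j \<le> k" for j k
    unfolding subalgebra_def using spF Fle[OF that] by simp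
  have blP: "bounded_linear ((*v) P)" by (rule matrix_vector_mul_bounded_linear)
  have Jc: "continuous_on UNIV J"
  proof -
    have c1: "continuous_on UNIV (\<lambda>v::real^'n. v - ws)" by (intro continuous_intros)
    have c2: "continuous_on UNIV (\<lambda>v. P *v (v - ws))"
      using continuous_on_compose[OF c1 linear_continuous_on[OF blP]] by (simp add: o_def)
    have "continuous_on UNIV (\<lambda>v. J ws + (v - ws) \<bullet> (P *v (v - ws)))"
      by (intro continuous_on_add continuous_on_const continuous_on_inner c1 c2)
    moreover have "J = (\<lambda>v. J ws + (v - ws) \<bullet> (P *v (v - ws)))" by (rule ext, rule Jq)
    ultimately show ?thesis by metis
  qed
  have Jm: "J \<in> borel_measurable borel" by (rule borel_measurable_continuous_onI[OF Jc])
  have Wsuc: "W (Suc k) = (\<lambda>\<omega>. upd eps (alpha J eps lam rho N k (W k \<omega>) (g1 k \<omega>))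
      (alpha J eps lam rho N k (W k \<omega>) (g2 k \<omega>)) (W k \<omega>) (g1 k \<omega>) (g2 k \<omega>))" for k
    unfolding W_def by (simp add: Let_def)
  have W0: "W 0 = (\<lambda>\<omega>. w0)" unfolding W_def by simp
  have WF: "W k \<in> borel_measurable (F k)" for k
  proof (induction k)
    case 0 then show ?case unfolding W0 by simp
  next
    case (Suc k)
    have "W k \<in> borel_measurable (F (Suc k))"
      by (rule measurable_from_subalg[OF subFF Suc.IH]) simp
    then show ?case unfolding Wsuc using g_meas by (intro meas_upd Jm) auto
  qed
  have WM: "W k \<in> borel_measurable M" for k by (rule measurable_from_subalg[OF subFM WF])
  have WFc: "(\<lambda>\<omega>. W k \<omega> $ i) \<in> borel_measurable (F k)" for k i
    using measurable_compose[OF WF borel_measurable_nth] by simp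
  have WMc: "(\<lambda>\<omega>. W k \<omega> $ i) \<in> borel_measurable M" for k i
    using measurable_compose[OF WM borel_measurable_nth] by simp
  have gMc: "(\<lambda>\<omega>. g1 k \<omega> $ i) \<in> borel_measurable M" "(\<lambda>\<omega>. g2 k \<omega> $ i) \<in> borel_measurable M" for k i
    using measurable_compose[OF measurable_from_subalg[OF subFM] borel_measurable_nth] g_meas by auto
  have gsq: "sqi M (\<lambda>\<omega>. g1 k \<omega> $ i)" "sqi M (\<lambda>\<omega>. g2 k \<omega> $ i)" if "k < N" for k i
    using gMc g_L2 that by (auto simp: sqi_def)
  have Wsq: "sqi M (\<lambda>\<omega>. W k \<omega> $ i)" if "k \<le> N" for k i
    using that
  proof (induction k)
    case 0 show ?case unfolding W0 using sqi_const[OF fm] by simp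
  next
    case (Suc k)
    then have kN: "k < N" by simp
    have IH: "sqi M (\<lambda>\<omega>. W k \<omega> $ i)" using Suc kN by simp
    have int: "integrable M (\<lambda>\<omega>. 3 * ((W k \<omega> $ i)^2 + eps^2 * (g1 k \<omega> $ i)^2 + eps^2 * (g2 k \<omega> $ i)^2))"
      using IH gsq[OF kN, of i] by (simp add: sqi_def)
    have "integrable M (\<lambda>\<omega>. (W (Suc k) \<omega> $ i)^2)"
    proof (rule Bochner_Integration.integrable_bound[OF int])
      show "(\<lambda>\<omega>. (W (Suc k) \<omega> $ i)^2) \<in> borel_measurable M" using WMc by measurable
      show "AE \<omega> in M. norm ((W (Suc k) \<omega> $ i)^2)
          \<le> norm (3 * ((W k \<omega> $ i)^2 + eps^2 * (g1 k \<omega> $ i)^2 + eps^2 * (g2 k \<omega> $ i)^2))"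
      proof (rule AE_I2)
        fix \<omega>
        have b: "\<bar>W (Suc k) \<omega> $ i\<bar> \<le> \<bar>W k \<omega> $ i\<bar> + eps * \<bar>g1 k \<omega> $ i\<bar> + eps * \<bar>g2 k \<omega> $ i\<bar>"
          unfolding Wsuc using eps by (intro upd_comp_bound) auto
        have "(W (Suc k) \<omega> $ i)^2 \<le> (\<bar>W k \<omega> $ i\<bar> + eps * \<bar>g1 k \<omega> $ i\<bar> + eps * \<bar>g2 k \<omega> $ i\<bar>)^2"
          using b by (metis abs_ge_zero order_trans power2_abs power_mono)
        also have "\<dots> \<le> 3 * ((W k \<omega> $ i)^2 + eps^2 * (g1 k \<omega> $ i)^2 + eps^2 * (g2 k \<omega> $ i)^2)"
          using sq3[of "\<bar>W k \<omega> $ i\<bar>" "eps * \<bar>g1 k \<omega> $ i\<bar>" "eps * \<bar>g2 k \<omega> $ i\<bar>"]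
          by (simp add: power_mult_distrib)
        finally show "norm ((W (Suc k) \<omega> $ i)^2)
          \<le> norm (3 * ((W k \<omega> $ i)^2 + eps^2 * (g1 k \<omega> $ i)^2 + eps^2 * (g2 k \<omega> $ i)^2))"
          by simp
      qed
    qed
    then show ?case using WMc by (simp add: sqi_def)
  qed
  define Y where "Y k \<omega> = ((J (W k \<omega> - eps *\<^sub>R g1 k \<omega>) - J (W k \<omega>)) + (J (W k \<omega> - eps *\<^sub>R g2 k \<omega>) - J (W k \<omega>))) / 2
      + (1 - rho) * (J (W k \<omega>) - J ws)" for k \<omega>
  define S where "S = (\<Sum>i\<in>UNIV. \<Sum>j\<in>UNIV. P$i$j * G$i$j)"
  have trS: "trace (P ** G) = S"
  proof -
    have "trace (P ** G) = (\<Sum>i\<in>UNIV. \<Sum>j\<in>UNIV. P$i$j * G$j$i)"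
      by (simp add: trace_def matrix_matrix_mult_def)
    also have "\<dots> = (\<Sum>j\<in>UNIV. \<Sum>i\<in>UNIV. P$i$j * G$j$i)" by (rule sum.swap)
    also have "\<dots> = (\<Sum>j\<in>UNIV. \<Sum>i\<in>UNIV. P$j$i * G$j$i)" using symP by simp
    finally show ?thesis unfolding S_def .
  qed
  have EY: "integrable M (Y k) \<and> (\<integral>\<omega>. Y k \<omega> \<partial>M) \<le> eps^2 * S" if kN: "k < N" for k
  proof -
    define D where "D \<omega> = W k \<omega> - ws" for \<omega>
    define Gr where "Gr \<omega> = grad J (W k \<omega>)" for \<omega>
    have Grf: "Gr \<omega> = 2 *\<^sub>R (P *v D \<omega>)" for \<omega> unfolding Gr_def D_def by (rule gradJ)
    have Grc: "Gr \<omega> $ j = 2 * (\<Sum>l\<in>UNIV. P$j$l * (W k \<omega> $ l - ws $ l))" for \<omega> j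
      by (simp add: Grf D_def matrix_vector_mult_def)
    have Dc: "D \<omega> $ j = W k \<omega> $ j - ws $ j" for \<omega> j by (simp add: D_def)
    have Dsq: "sqi M (\<lambda>\<omega>. D \<omega> $ j)" for j
      unfolding Dc by (rule sqi_diff[OF Wsq sqi_const[OF fm]]) (use kN in simp)
    have DF: "(\<lambda>\<omega>. D \<omega> $ j) \<in> borel_measurable (F k)" for j
      unfolding Dc using WFc by measurable
    have Grsq: "sqi M (\<lambda>\<omega>. Gr \<omega> $ j)" for j
      unfolding Grc
      by (intro sqi_cmult sqi_sum sqi_diff Wsq sqi_const[OF fm]) (use kN in auto)
    have GrF: "(\<lambda>\<omega>. Gr \<omega> $ j) \<in> borel_measurable (F k)" for j
      unfolding Grc using WFc by measurable
    have sfs: "sigma_finite_subalgebra M (F k)" using F_sub by simp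
    have mean1: "AE \<omega> in M. real_cond_exp M (F k) (\<lambda>\<omega>. g1 k \<omega> $ j) \<omega> = Gr \<omega> $ j" for j
      using g_mean kN unfolding Gr_def by simp
    have mean2: "AE \<omega> in M. real_cond_exp M (F k) (\<lambda>\<omega>. g2 k \<omega> $ j) \<omega> = Gr \<omega> $ j" for j
      using g_mean kN unfolding Gr_def by simp
    have cov1: "AE \<omega> in M. real_cond_exp M (F k)
            (\<lambda>\<omega>. (g1 k \<omega> $ i - Gr \<omega> $ i) * (g1 k \<omega> $ j - Gr \<omega> $ j)) \<omega> = G $ i $ j" for i j
      using g_cov kN unfolding Gr_def by simp
    have cov2: "AE \<omega> in M. real_cond_exp M (F k)
            (\<lambda>\<omega>. (g2 k \<omega> $ i - Gr \<omega> $ i) * (g2 k \<omega> $ j - Gr \<omega> $ j)) \<omega> = G $ i $ j" for i j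
      using g_cov kN unfolding Gr_def by simp
    note E1 = exp_x[OF sfs M gsq(1)[OF kN] Grsq GrF Dsq DF mean1 cov1, of eps P]
    note E2 = exp_x[OF sfs M gsq(2)[OF kN] Grsq GrF Dsq DF mean2 cov2, of eps P]
    define QD where "QD \<omega> = D \<omega> \<bullet> (P *v D \<omega>)" for \<omega>
    define R where "R \<omega> = (D \<omega> - eps *\<^sub>R Gr \<omega>) \<bullet> (P *v (D \<omega> - eps *\<^sub>R Gr \<omega>)) - QD \<omega>" for \<omega>
    define X1 where "X1 \<omega> = (D \<omega> - eps *\<^sub>R g1 k \<omega>) \<bullet> (P *v (D \<omega> - eps *\<^sub>R g1 k \<omega>)) - QD \<omega>" for \<omega>
    define X2 where "X2 \<omega> = (D \<omega> - eps *\<^sub>R g2 k \<omega>) \<bullet> (P *v (D \<omega> - eps *\<^sub>R g2 k \<omega>)) - QD \<omega>" for \<omega>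
    have iX1: "integrable M X1" using E1(1) unfolding X1_def QD_def .
    have iX2: "integrable M X2" using E2(1) unfolding X2_def QD_def .
    have iR: "integrable M R" using E1(2) unfolding R_def QD_def .
    have eX1: "(\<integral>\<omega>. X1 \<omega> \<partial>M) = (\<integral>\<omega>. R \<omega> \<partial>M) + eps^2 * S" using E1(3) unfolding X1_def R_def QD_def S_def .
    have eX2: "(\<integral>\<omega>. X2 \<omega> \<partial>M) = (\<integral>\<omega>. R \<omega> \<partial>M) + eps^2 * S" using E2(3) unfolding X2_def R_def QD_def S_def .
    have iQD: "integrable M QD"
      unfolding QD_def qsum
      by (intro Bochner_Integration.integrable_sum integrable_mult_right sqi_mult Dsq)
    have Jeq: "J (W k \<omega> - eps *\<^sub>R h) - J (W k \<omega>) = (D \<omega> - eps *\<^sub>R h) \<bullet> (P *v (D \<omega> - eps *\<^sub>R h)) - QD \<omega>" for \<omega> h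
    proof -
      have e: "W k \<omega> - eps *\<^sub>R h - ws = D \<omega> - eps *\<^sub>R h" unfolding D_def by (simp add: algebra_simps)
      have e2: "W k \<omega> - ws = D \<omega>" by (simp add: D_def)
      have "J (W k \<omega> - eps *\<^sub>R h) - J (W k \<omega>) = (W k \<omega> - eps *\<^sub>R h - ws) \<bullet> (P *v (W k \<omega> - eps *\<^sub>R h - ws))
          - (W k \<omega> - ws) \<bullet> (P *v (W k \<omega> - ws))"
        using Jq[of "W k \<omega> - eps *\<^sub>R h"] Jq[of "W k \<omega>"] by simp
      also have "\<dots> = (D \<omega> - eps *\<^sub>R h) \<bullet> (P *v (D \<omega> - eps *\<^sub>R h)) - D \<omega> \<bullet> (P *v D \<omega>)"
        by (simp only: e e2)
      finally show ?thesis unfolding QD_def .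
    qed
    have JQ: "J (W k \<omega>) - J ws = QD \<omega>" for \<omega> using Jq[of "W k \<omega>"] unfolding QD_def D_def by simp
    have Yeq: "Y k = (\<lambda>\<omega>. (1/2) * X1 \<omega> + (1/2) * X2 \<omega> + (1 - rho) * QD \<omega>)"
      unfolding Y_def X1_def X2_def Jeq JQ by (rule ext) (simp add: field_simps)
    have iY: "integrable M (Y k)" unfolding Yeq using iX1 iX2 iQD by simp
    have RQ: "R \<omega> \<le> (rho - 1) * QD \<omega>" for \<omega>
    proof -
      have "D \<omega> - eps *\<^sub>R Gr \<omega> = D \<omega> - (2 * eps) *\<^sub>R (P *v D \<omega>)" unfolding Grf by simp
      then show ?thesis using contr[of "D \<omega>"] unfolding R_def QD_def by (simp add: algebra_simps)
    qed
    have intR: "(\<integral>\<omega>. R \<omega> \<partial>M) \<le> (rho - 1) * (\<integral>\<omega>. QD \<omega> \<partial>M)"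
    proof -
      have "(\<integral>\<omega>. R \<omega> \<partial>M) \<le> (\<integral>\<omega>. (rho - 1) * QD \<omega> \<partial>M)"
        by (rule integral_mono[OF iR]) (use iQD RQ in auto)
      then show ?thesis by simp
    qed
    have "(\<integral>\<omega>. Y k \<omega> \<partial>M) = (1/2) * (\<integral>\<omega>. X1 \<omega> \<partial>M) + (1/2) * (\<integral>\<omega>. X2 \<omega> \<partial>M) + (1 - rho) * (\<integral>\<omega>. QD \<omega> \<partial>M)"
      unfolding Yeq using iX1 iX2 iQD by simp
    also have "\<dots> = (\<integral>\<omega>. R \<omega> \<partial>M) + eps^2 * S + (1 - rho) * (\<integral>\<omega>. QD \<omega> \<partial>M)"
      unfolding eX1 eX2 by (simp add: field_simps)
    also have "\<dots> \<le> eps^2 * S" using intR by (simp add: algebra_simps)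
    finally show ?thesis using iY by simp
  qed
  define A where "A k \<omega> = (alpha J eps lam rho N k (W k \<omega>) (g1 k \<omega>) + alpha J eps lam rho N k (W k \<omega>) (g2 k \<omega>)) / (2 * real N)" for k \<omega>
  define Z where "Z \<omega> = lam * (\<Sum>k<N. A k \<omega>) + J (W N \<omega>)" for \<omega>
  define U where "U \<omega> = lam + J ws + rho^N * (J w0 - J ws) + (\<Sum>k<N. rho^(N-1-k) * Y k \<omega>)" for \<omega>
  have conv: "J ((1/2) *\<^sub>R (u1 + u2)) \<le> (J u1 + J u2) / 2" for u1 u2
  proof -
    have e: "(1/2) *\<^sub>R (u1 + u2) - ws = (1/2) *\<^sub>R ((u1 - ws) + (u2 - ws))"
      by (simp add: vec_eq_iff field_simps)
    have "J ((1/2) *\<^sub>R (u1 + u2)) = J ws + ((1/2) *\<^sub>R ((u1 - ws) + (u2 - ws))) \<bullet> (P *v ((1/2) *\<^sub>R ((u1 - ws) + (u2 - ws))))"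
      using Jq[of "(1/2) *\<^sub>R (u1 + u2)"] unfolding e .
    also have "\<dots> \<le> J ws + ((u1 - ws) \<bullet> (P *v (u1 - ws)) + (u2 - ws) \<bullet> (P *v (u2 - ws))) / 2"
      using convex_q[OF symP psd, of "u1 - ws" "u2 - ws"] by simp
    also have "\<dots> = (J u1 + J u2) / 2" using Jq[of u1] Jq[of u2] by (simp add: field_simps)
    finally show ?thesis .
  qed
  have path: "Z \<omega> \<le> U \<omega>" for \<omega>
  proof -
    have st: "rho^(N-1-k) * (J (W (Suc k) \<omega>) - J (W k \<omega>)) + lam * A k \<omega>
        \<le> rho^(N-1-k) * (((J (W k \<omega> - eps *\<^sub>R g1 k \<omega>) - J (W k \<omega>)) + (J (W k \<omega> - eps *\<^sub>R g2 k \<omega>) - J (W k \<omega>))) / 2)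
          + lam / real N" for k
      unfolding Wsuc A_def
      by (rule step_ineq[OF conv rho(1) N]) (use lam in simp)
    have "lam * (\<Sum>k<N. A k \<omega>) + J (W N \<omega>) \<le> lam + J ws + rho^N * (J (W 0 \<omega>) - J ws)
        + (\<Sum>k<N. rho^(N-1-k) * (((J (W k \<omega> - eps *\<^sub>R g1 k \<omega>) - J (W k \<omega>)) + (J (W k \<omega> - eps *\<^sub>R g2 k \<omega>) - J (W k \<omega>))) / 2
             + (1 - rho) * (J (W k \<omega>) - J ws)))"
      by (rule telescope[where Jk = "\<lambda>k. J (W k \<omega>)" and a = "\<lambda>k. A k \<omega>", OF N st])
    then show ?thesis unfolding Z_def U_def Y_def W0 by simp
  qed
  have Zpos: "Z \<omega> \<ge> 0" for \<omega>
  proof -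
    have "A k \<omega> \<ge> 0" for k unfolding A_def by (simp add: alpha_nonneg)
    then have "(\<Sum>k<N. A k \<omega>) \<ge> 0" by (simp add: sum_nonneg)
    then show ?thesis unfolding Z_def using lam Jnn[of "W N \<omega>"] by simp
  qed
  have iU: "integrable M U"
    unfolding U_def using EY by (intro Bochner_Integration.integrable_add Bochner_Integration.integrable_sum integrable_mult_right) auto
  have "(\<integral>\<^sup>+ \<omega>. ennreal (Z \<omega>) \<partial>M) \<le> (\<integral>\<^sup>+ \<omega>. ennreal (U \<omega>) \<partial>M)"
    by (rule nn_integral_mono) (simp add: path ennreal_leI)
  also have "(\<integral>\<^sup>+ \<omega>. ennreal (U \<omega>) \<partial>M) = ennreal (\<integral>\<omega>. U \<omega> \<partial>M)"
    by (rule nn_integral_eq_integral[OF iU]) (use Zpos path in \<open>auto intro: order_trans\<close>)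
  also have "(\<integral>\<omega>. U \<omega> \<partial>M) \<le> lam + J ws + rho ^ N * (J w0 - J ws) + (1 - rho ^ N) / (1 - rho) * eps^2 * trace (P ** G)"
  proof -
    have "(\<integral>\<omega>. U \<omega> \<partial>M) = lam + J ws + rho^N * (J w0 - J ws) + (\<Sum>k<N. rho^(N-1-k) * (\<integral>\<omega>. Y k \<omega> \<partial>M))"
    proof -
      have iS: "integrable M (\<lambda>\<omega>. \<Sum>k<N. rho^(N-1-k) * Y k \<omega>)"
        using EY by (intro Bochner_Integration.integrable_sum integrable_mult_right) auto
      have "(\<integral>\<omega>. U \<omega> \<partial>M) = (\<integral>\<omega>. lam + J ws + rho^N * (J w0 - J ws) \<partial>M) + (\<integral>\<omega>. (\<Sum>k<N. rho^(N-1-k) * Y k \<omega>) \<partial>M)"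
        unfolding U_def by (rule Bochner_Integration.integral_add[OF integrable_const iS])
      also have "(\<integral>\<omega>. lam + J ws + rho^N * (J w0 - J ws) \<partial>M) = lam + J ws + rho^N * (J w0 - J ws)"
        by (simp add: prob_space)
      also have "(\<integral>\<omega>. (\<Sum>k<N. rho^(N-1-k) * Y k \<omega>) \<partial>M) = (\<Sum>k<N. (\<integral>\<omega>. rho^(N-1-k) * Y k \<omega> \<partial>M))"
        using EY by (intro Bochner_Integration.integral_sum integrable_mult_right) auto
      also have "\<dots> = (\<Sum>k<N. rho^(N-1-k) * (\<integral>\<omega>. Y k \<omega> \<partial>M))" by simp
      finally show ?thesis .
    qed
    also have "(\<Sum>k<N. rho^(N-1-k) * (\<integral>\<omega>. Y k \<omega> \<partial>M)) \<le> (\<Sum>k<N. rho^(N-1-k) * (eps^2 * S))"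
      by (intro sum_mono mult_left_mono) (use EY rho in auto)
    also have "(\<Sum>k<N. rho^(N-1-k) * (eps^2 * S)) = (\<Sum>k<N. rho^k) * (eps^2 * S)"
    proof -
      have "(\<Sum>k<N. rho^(N-1-k)) = (\<Sum>k<N. rho^k)"
        using sum.atLeastLessThan_rev[of "\<lambda>k. rho^k" 0 N] by (simp add: lessThan_atLeast0)
      then show ?thesis by (simp only: sum_distrib_right[symmetric])
    qed
    also have "(\<Sum>k<N. rho^k) = (1 - rho^N) / (1 - rho)" using rho by (simp add: sum_gp_strict)
    finally show ?thesis unfolding trS by (simp add: mult_ac)
  qed
  then have "ennreal (\<integral>\<omega>. U \<omega> \<partial>M) \<le> ennreal (lam + J ws + rho ^ N * (J w0 - J ws) + (1 - rho ^ N) / (1 - rho) * eps^2 * trace (P ** G))"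
    by (rule ennreal_leI)
  finally show ?thesis unfolding Z_def A_def .
qed


theorem theorem1:
  fixes d :: "'x measure" and V :: "'x \<Rightarrow> real" and phi :: "'x \<Rightarrow> real^'n"
    and eps rho lam :: real and N :: nat and w0 wstar :: "real^'n" and G :: "real^'n^'n"
    and M :: "'w measure" and F :: "nat \<Rightarrow> 'w measure"
    and g1 g2 :: "nat \<Rightarrow> 'w \<Rightarrow> real^'n"
  defines "J \<equiv> Jobj d V phi"
    and "\<Phi> \<equiv> Phi_mat d phi"
    and "w \<equiv> (\<lambda>k \<omega>. traj (Jobj d V phi) eps lam rho N w0 (\<lambda>i. g1 i \<omega>) (\<lambda>i. g2 i \<omega>) k)"
    and "a1 \<equiv> (\<lambda>k \<omega>. alpha (Jobj d V phi) eps lam rho N k (traj (Jobj d V phi) eps lam rho N w0 (\<lambda>i. g1 i \<omega>) (\<lambda>i. g2 i \<omega>) k) (g1 k \<omega>))"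
    and "a2 \<equiv> (\<lambda>k \<omega>. alpha (Jobj d V phi) eps lam rho N k (traj (Jobj d V phi) eps lam rho N w0 (\<lambda>i. g1 i \<omega>) (\<lambda>i. g2 i \<omega>) k) (g2 k \<omega>))"
  assumes d: "prob_space d"
    and phi_meas: "phi \<in> borel_measurable d" and V_meas: "V \<in> borel_measurable d"
    and phi_L2: "integrable d (\<lambda>x. (norm (phi x))^2)"
    and V_L2: "integrable d (\<lambda>x. (V x)^2)"
    and pd: "pos_def \<Phi>"
    and wstar: "\<forall>v. J wstar \<le> J v"
    and eps: "eps > 0"
    and step: "\<forall>l. is_eigenvalue \<Phi> l \<longrightarrow> \<bar>1 - 2 * eps * l\<bar> < 1"
    and rho: "0 < rho" "rho < 1"
    and rho_ge: "\<forall>l. is_eigenvalue \<Phi> l \<longrightarrow> (1 - 2 * eps * l)^2 \<le> rho"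
    and lam: "lam > 0" and N: "N \<ge> 1"
    and M: "prob_space M"
    and F_sub: "\<forall>k. sigma_finite_subalgebra M (F k)"
    and F_mono: "\<forall>k. sets (F k) \<subseteq> sets (F (Suc k))"
    and g_meas: "\<forall>k. g1 k \<in> borel_measurable (F (Suc k)) \<and> g2 k \<in> borel_measurable (F (Suc k))"
    and g_L2: "\<forall>k<N. \<forall>j. integrable M (\<lambda>\<omega>. (g1 k \<omega> $ j)^2) \<and> integrable M (\<lambda>\<omega>. (g2 k \<omega> $ j)^2)"
    and g_mean: "\<forall>k<N. \<forall>j.
        (AE \<omega> in M. real_cond_exp M (F k) (\<lambda>\<omega>. g1 k \<omega> $ j) \<omega> = grad J (w k \<omega>) $ j) \<and>
        (AE \<omega> in M. real_cond_exp M (F k) (\<lambda>\<omega>. g2 k \<omega> $ j) \<omega> = grad J (w k \<omega>) $ j)"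
    and g_cov: "\<forall>k<N. \<forall>i j.
        (AE \<omega> in M. real_cond_exp M (F k)
            (\<lambda>\<omega>. (g1 k \<omega> $ i - grad J (w k \<omega>) $ i) * (g1 k \<omega> $ j - grad J (w k \<omega>) $ j)) \<omega> = G $ i $ j) \<and>
        (AE \<omega> in M. real_cond_exp M (F k)
            (\<lambda>\<omega>. (g2 k \<omega> $ i - grad J (w k \<omega>) $ i) * (g2 k \<omega> $ j - grad J (w k \<omega>) $ j)) \<omega> = G $ i $ j)"
    and g_cond_iid: "\<forall>k<N. \<forall>f h :: real^'n \<Rightarrow> real.
        f \<in> borel_measurable borel \<longrightarrow> h \<in> borel_measurable borel \<longrightarrow>
        bounded (range f) \<longrightarrow> bounded (range h) \<longrightarrow>
        (AE \<omega> in M. real_cond_exp M (F k) (\<lambda>\<omega>. f (g1 k \<omega>) * h (g2 k \<omega>)) \<omega> =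
            real_cond_exp M (F k) (\<lambda>\<omega>. f (g1 k \<omega>)) \<omega> * real_cond_exp M (F k) (\<lambda>\<omega>. h (g2 k \<omega>)) \<omega>) \<and>
        (AE \<omega> in M. real_cond_exp M (F k) (\<lambda>\<omega>. f (g1 k \<omega>)) \<omega> =
            real_cond_exp M (F k) (\<lambda>\<omega>. f (g2 k \<omega>)) \<omega>)"
  shows "(\<integral>\<^sup>+ \<omega>. ennreal (lam * (\<Sum>k<N. (a1 k \<omega> + a2 k \<omega>) / (2 * real N)) + J (w N \<omega>)) \<partial>M)
         \<le> ennreal (lam + J wstar + rho ^ N * (J w0 - J wstar)
                    + (1 - rho ^ N) / (1 - rho) * eps^2 * trace (\<Phi> ** G))"
  proof -
  have symP: "\<And>i j. \<Phi>$i$j = \<Phi>$j$i" unfolding \<Phi>_def by (rule Phi_sym)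
  have Jexp: "\<And>v. J v = (\<integral>x. (V x)^2 \<partial>d) - 2 * ((\<chi> i. \<integral>x. V x * phi x $ i \<partial>d) \<bullet> v) + v \<bullet> (\<Phi> *v v)"
    unfolding J_def \<Phi>_def by (rule J_expand[OF d phi_meas V_meas phi_L2 V_L2])
  have Jq: "\<And>v. J v = J wstar + (v - wstar) \<bullet> (\<Phi> *v (v - wstar))"
    by (rule quad_min[OF symP Jexp wstar])
  have psd: "\<And>x. x \<bullet> (\<Phi> *v x) \<ge> 0"
  proof -
    fix x :: "real^'n"
    show "x \<bullet> (\<Phi> *v x) \<ge> 0"
      using pd unfolding pos_def_def by (cases "x = 0") (auto intro: less_imp_le)
  qed
  have Jnn: "\<And>v. J v \<ge> 0" unfolding J_def by (rule J_nonneg[OF d phi_meas V_meas phi_L2 V_L2])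
  have contr: "\<And>x. (x - (2*eps) *\<^sub>R (\<Phi> *v x)) \<bullet> (\<Phi> *v (x - (2*eps) *\<^sub>R (\<Phi> *v x))) \<le> rho * (x \<bullet> (\<Phi> *v x))"
    by (rule contraction[OF symP pd rho_ge])
  have gradJ: "\<And>v. grad J v = 2 *\<^sub>R (\<Phi> *v (v - wstar))"
    by (rule grad_quad[OF symP Jq])
  show ?thesis
    unfolding a1_def a2_def
    using main_abs[OF Jq symP psd Jnn contr gradJ eps rho lam N M F_sub F_mono g_meas g_L2]
      g_mean g_cov
    unfolding w_def J_def by blast
qed

end
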